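(* For integers $n\ge 2$ and $0\le k\le n-1$, let $\mathrm{TH}_k:\{0,1\}^n\rightarrow\{0,1\}$ be defined by $\mathrm{TH}_k(x)=1$ iff $|x|>k$, where $|x|$ is the Hamming weight. Then $UC(\mathrm{TH}_k)=UQ(\mathrm{TH}_k)=1$, and $WUC(\mathrm{TH}_k)=WUQ(\mathrm{TH}_k)=\Theta(\log n)$, i.e. there are constants $c_1,c_2>0$ (independent of $n,k$) such that $c_1\log n\le WUQ(\mathrm{TH}_k)\le WUC(\mathrm{TH}_k)\le c_2\log n$ for all sufficiently large $n$ and all $0\le k\le n-1$.
   Context: Query model: a classical randomized query algorithm adaptively queries input bits $x_i$ (each query costs one) and outputs a bit; a quantum query algorithm alternates input-independent unitaries with the oracle $O_x:|i,b,z\rangle\mapsto|i,b\oplus x_i,z\rangle$ and measures an output bit. $UQ(f)$ (resp. $UC(f)$) is the minimum number of queries of a quantum (resp. classical randomized) algorithm that on every input outputs $f(x)$ with probability strictly greater than $1/2$. For an algorithm whose minimum over inputs of the success probability is $p>1/2$, its bias is $\beta=p-1/2$ and its weakly unbounded cost is (number of queries) $+\log(1/(2\beta))$; $WUQ(f)$ (resp. $WUC(f)$) is the minimum weakly unbounded cost over quantum (resp. classical randomized) algorithms. $\log$ is base 2. *)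

theory Defs
  imports "HOL-Probability.Probability" "Jordan_Normal_Form.Schur_Decomposition"
begin

definition inputs :: "nat \<Rightarrow> bool list set" where
  "inputs n = {x. length x = n}"

definition TH :: "nat \<Rightarrow> bool list \<Rightarrow> bool" where
  "TH k x = (count_list x True > k)"

datatype dtree = Leaf bool | Query nat dtree dtree

fun dt_eval :: "dtree \<Rightarrow> bool list \<Rightarrow> bool" where
  "dt_eval (Leaf b) x = b"
| "dt_eval (Query i t0 t1) x = (if x ! i then dt_eval t1 x else dt_eval t0 x)"

fun dt_depth :: "dtree \<Rightarrow> nat" where
  "dt_depth (Leaf b) = 0"
| "dt_depth (Query i t0 t1) = Suc (max (dt_depth t0) (dt_depth t1))"

fun dt_vars :: "dtree \<Rightarrow> nat set" where
  "dt_vars (Leaf b) = {}"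
| "dt_vars (Query i t0 t1) = insert i (dt_vars t0 \<union> dt_vars t1)"

definition cl_alg :: "nat \<Rightarrow> nat \<Rightarrow> dtree pmf \<Rightarrow> bool" where
  "cl_alg n q D \<longleftrightarrow> (\<forall>T\<in>set_pmf D. dt_depth T \<le> q \<and> dt_vars T \<subseteq> {..<n})"

definition cl_succ :: "dtree pmf \<Rightarrow> (bool list \<Rightarrow> bool) \<Rightarrow> bool list \<Rightarrow> real" where
  "cl_succ D f x = measure_pmf.prob D {T. dt_eval T x = f x}"

definition cl_min_succ :: "nat \<Rightarrow> (bool list \<Rightarrow> bool) \<Rightarrow> dtree pmf \<Rightarrow> real" where
  "cl_min_succ n f D = Min ((\<lambda>x. cl_succ D f x) ` inputs n)"

definition UC :: "nat \<Rightarrow> (bool list \<Rightarrow> bool) \<Rightarrow> nat" where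
  "UC n f = (LEAST q. \<exists>D. cl_alg n q D \<and> (\<forall>x\<in>inputs n. cl_succ D f x > 1/2))"

definition WUC :: "nat \<Rightarrow> (bool list \<Rightarrow> bool) \<Rightarrow> real" where
  "WUC n f = Inf {real q + log 2 (1 / (2 * (cl_min_succ n f D - 1/2))) | q D.
                   cl_alg n q D \<and> cl_min_succ n f D > 1/2}"

text \<open>State space: basis |i,b,z> with i<n, b<2, z<m, encoded as i*(2*m) + b*m + z;
dimension n*2*m.\<close>

definition qdim :: "nat \<Rightarrow> nat \<Rightarrow> nat" where
  "qdim n m = n * 2 * m"

definition qop_perm :: "nat \<Rightarrow> bool list \<Rightarrow> nat \<Rightarrow> nat" where
  "qop_perm m x e =
     (if x ! (e div (2 * m))
      then (if (e mod (2 * m)) div m = 0 then e + m else e - m)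
      else e)"

text \<open>Query operator O_x : |i,b,z> -> |i, b xor x_i, z>.\<close>
definition qop :: "nat \<Rightarrow> nat \<Rightarrow> bool list \<Rightarrow> complex mat" where
  "qop n m x = mat (qdim n m) (qdim n m)
     (\<lambda>(r, c). if r = qop_perm m x c then 1 else 0)"

definition is_unitary :: "nat \<Rightarrow> complex mat \<Rightarrow> bool" where
  "is_unitary d U \<longleftrightarrow> U \<in> carrier_mat d d \<and> mat_adjoint U * U = 1\<^sub>m d"

fun qrun :: "complex mat \<Rightarrow> complex mat list \<Rightarrow> complex Matrix.vec \<Rightarrow> complex Matrix.vec" where
  "qrun Ox [] v = v"
| "qrun Ox [U] v = mult_mat_vec U v"
| "qrun Ox (U # U' # Us) v = qrun Ox (U' # Us) (mult_mat_vec Ox (mult_mat_vec U v))"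

text \<open>A quantum algorithm making q queries: workspace size m >= 1, unitaries U_0..U_q,
and a final computational-basis measurement whose outcome is 1 iff the observed
basis index lies in S (since U_q is arbitrary this is a general two-outcome projective measurement).\<close>
definition q_alg :: "nat \<Rightarrow> nat \<Rightarrow> nat \<Rightarrow> complex mat list \<Rightarrow> bool" where
  "q_alg n q m Us \<longleftrightarrow> m \<ge> 1 \<and> length Us = Suc q \<and> (\<forall>U\<in>set Us. is_unitary (qdim n m) U)"

definition q_prob1 :: "nat \<Rightarrow> nat \<Rightarrow> complex mat list \<Rightarrow> nat set \<Rightarrow> bool list \<Rightarrow> real" where
  "q_prob1 n m Us S x =
     (let w = qrun (qop n m x) Us (unit_vec (qdim n m) 0)
      in \<Sum>j\<in>S \<inter> {..<qdim n m}. (cmod (vec_index w j))\<^sup>2)"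

definition q_succ :: "nat \<Rightarrow> nat \<Rightarrow> complex mat list \<Rightarrow> nat set \<Rightarrow> (bool list \<Rightarrow> bool) \<Rightarrow> bool list \<Rightarrow> real" where
  "q_succ n m Us S f x = (if f x then q_prob1 n m Us S x else 1 - q_prob1 n m Us S x)"

definition q_min_succ :: "nat \<Rightarrow> nat \<Rightarrow> complex mat list \<Rightarrow> nat set \<Rightarrow> (bool list \<Rightarrow> bool) \<Rightarrow> real" where
  "q_min_succ n m Us S f = Min ((\<lambda>x. q_succ n m Us S f x) ` inputs n)"

definition UQ :: "nat \<Rightarrow> (bool list \<Rightarrow> bool) \<Rightarrow> nat" where
  "UQ n f = (LEAST q. \<exists>m Us S. q_alg n q m Us \<and> (\<forall>x\<in>inputs n. q_succ n m Us S f x > 1/2))"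

definition WUQ :: "nat \<Rightarrow> (bool list \<Rightarrow> bool) \<Rightarrow> real" where
  "WUQ n f = Inf {real q + log 2 (1 / (2 * (q_min_succ n m Us S f - 1/2))) | q m Us S.
                   q_alg n q m Us \<and> q_min_succ n m Us S f > 1/2}"

end

theory Submission
  imports Defs
begin


definition pmat :: "nat \<Rightarrow> (nat \<Rightarrow> nat) \<Rightarrow> complex mat" where
  "pmat d f = mat d d (\<lambda>(r, c). if r = f c then 1 else 0)"

definition pbij :: "nat \<Rightarrow> (nat \<Rightarrow> nat) \<Rightarrow> bool" where
  "pbij d f \<longleftrightarrow> inj_on f {..<d} \<and> f ` {..<d} \<subseteq> {..<d}"

lemma qop_pmat: "qop n m x = pmat (qdim n m) (qop_perm m x)"
  by (simp add: qop_def pmat_def)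

lemma pmat_dims[simp]: "dim_row (pmat d f) = d" "dim_col (pmat d f) = d"
  by (auto simp: pmat_def)

lemma pmat_index: "i < d \<Longrightarrow> j < d \<Longrightarrow> pmat d f $$ (i,j) = (if i = f j then 1 else 0)"
  by (simp add: pmat_def)

lemma pmat_apply_img:
  assumes pb: "pbij d f" and v: "dim_vec v = d" and c: "c < d"
  shows "vec_index (pmat d f *\<^sub>v v) (f c) = vec_index v c"
proof -
  have fc: "f c < d" using pb c by (auto simp: pbij_def)
  have "vec_index (pmat d f *\<^sub>v v) (f c) = (\<Sum>c'\<in>{0..<d}. (if f c = f c' then 1 else 0) * vec_index v c')"
    using fc v by (simp add: index_mult_mat_vec scalar_prod_def pmat_index Matrix.row_def)
  also have "\<dots> = (\<Sum>c'\<in>{0..<d}. if c' = c then vec_index v c' else 0)"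
  proof (rule sum.cong[OF refl])
    fix c' assume "c' \<in> {0..<d}"
    then have "f c = f c' \<longleftrightarrow> c' = c" using pb c unfolding pbij_def inj_on_def by auto
    then show "(if f c = f c' then 1 else 0) * vec_index v c' = (if c' = c then vec_index v c' else 0)"
      by auto
  qed
  also have "\<dots> = vec_index v c" using c by simp
  finally show ?thesis .
qed

lemma pbij_image: "pbij d f \<Longrightarrow> f ` {..<d} = {..<d}"
  unfolding pbij_def by (simp add: endo_inj_surj)

lemma pmat_prob:
  assumes pb: "pbij d f" and v: "dim_vec v = d"
  shows "(\<Sum>j\<in>S \<inter> {..<d}. (cmod (vec_index (pmat d f *\<^sub>v v) j))\<^sup>2)
       = (\<Sum>c\<in>{c. f c \<in> S} \<inter> {..<d}. (cmod (vec_index v c))\<^sup>2)"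
proof -
  have img: "f ` ({c. f c \<in> S} \<inter> {..<d}) = S \<inter> {..<d}"
    using pbij_image[OF pb] by auto
  have inj: "inj_on f ({c. f c \<in> S} \<inter> {..<d})"
    using pb unfolding pbij_def by (auto intro: inj_on_subset)
  have "(\<Sum>j\<in>S \<inter> {..<d}. (cmod (vec_index (pmat d f *\<^sub>v v) j))\<^sup>2)
      = (\<Sum>c\<in>{c. f c \<in> S} \<inter> {..<d}. (cmod (vec_index (pmat d f *\<^sub>v v) (f c)))\<^sup>2)"
    unfolding img[symmetric] by (rule sum.reindex[OF inj, unfolded comp_def])
  also have "\<dots> = (\<Sum>c\<in>{c. f c \<in> S} \<inter> {..<d}. (cmod (vec_index v c))\<^sup>2)"
    by (rule sum.cong[OF refl], simp add: pmat_apply_img[OF pb v])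
  finally show ?thesis .
qed

lemma mat_adjoint_dims[simp]: "dim_row (mat_adjoint A) = dim_col A" "dim_col (mat_adjoint A) = dim_row A"
  unfolding mat_adjoint_def by (simp_all add: mat_of_rows_def)
lemma mat_adjoint_index: assumes "i < dim_col A" "j < dim_row A"
  shows "mat_adjoint A $$ (i,j) = conjugate (A $$ (j,i))"
proof -
  have "mat_adjoint A $$ (i,j) = map conjugate (cols A) ! i $ j"
    unfolding mat_adjoint_def using assms by (intro mat_of_rows_index) auto
  also have "\<dots> = conjugate (Matrix.col A i) $ j" using assms by simp
  also have "\<dots> = conjugate (A $$ (j,i))" using assms by (simp add: vec_index_conjugate)
  finally show ?thesis .
qed

lemma pmat_unitary:
  assumes pb: "pbij d f"
  shows "is_unitary d (pmat d f)"
  unfolding is_unitary_def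
proof
  show "pmat d f \<in> carrier_mat d d" by (rule carrier_matI) simp_all
  show "mat_adjoint (pmat d f) * pmat d f = 1\<^sub>m d"
  proof (rule eq_matI)
    fix i j assume i: "i < dim_row (1\<^sub>m d)" and j: "j < dim_col (1\<^sub>m d)"
    then have i: "i < d" and j: "j < d" by auto
    have fi: "f i < d" using pb i by (auto simp: pbij_def)
    have "(mat_adjoint (pmat d f) * pmat d f) $$ (i,j) = Matrix.row (mat_adjoint (pmat d f)) i \<bullet> Matrix.col (pmat d f) j"
      using i j by (intro index_mult_mat) auto
    also have "\<dots> = (\<Sum>k\<in>{0..<d}. vec_index (Matrix.row (mat_adjoint (pmat d f)) i) k * vec_index (Matrix.col (pmat d f) j) k)"
      unfolding scalar_prod_def by simp
    also have "\<dots> = (\<Sum>k\<in>{0..<d}. conjugate (pmat d f $$ (k,i)) * pmat d f $$ (k,j))"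
      by (rule sum.cong[OF refl]) (use i j in \<open>simp add: mat_adjoint_index\<close>)
    also have "\<dots> = (\<Sum>k\<in>{0..<d}. if k = f i then (if i = j then 1 else 0) else 0)"
    proof (rule sum.cong[OF refl])
      fix k assume k: "k \<in> {0..<d}"
      have fij: "i \<noteq> j \<Longrightarrow> f i \<noteq> f j" using pb i j unfolding pbij_def inj_on_def by blast
      show "conjugate (pmat d f $$ (k,i)) * pmat d f $$ (k,j) = (if k = f i then (if i = j then 1 else 0) else 0)"
      proof (cases "k = f i")
        case True
        then show ?thesis using k i j fij fi by (cases "i = j") (simp_all add: pmat_index)
      next
        case False
        then show ?thesis using k i j by (simp add: pmat_index)
      qed
    qed
    also have "\<dots> = (if i = j then 1 else 0)" using fi by (simp add: sum.delta)
    finally show "(mat_adjoint (pmat d f) * pmat d f) $$ (i,j) = 1\<^sub>m d $$ (i,j)"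
      using i j by simp
  qed auto
qed

fun qtail :: "complex mat \<Rightarrow> complex mat list \<Rightarrow> complex Matrix.vec \<Rightarrow> complex Matrix.vec" where
  "qtail Ox [] w = w"
| "qtail Ox (U # Us) w = qtail Ox Us (U *\<^sub>v (Ox *\<^sub>v w))"

lemma qrun_qtail: "qrun Ox (U # Us) v = qtail Ox Us (U *\<^sub>v v)"
  by (induction Us arbitrary: U v) auto

fun fwd :: "(nat \<Rightarrow> nat) \<Rightarrow> (nat \<Rightarrow> nat) list \<Rightarrow> nat \<Rightarrow> nat" where
  "fwd p [] e = e"
| "fwd p (f # fs) e = fwd p fs (f (p e))"

lemma qtail_prob:
  assumes "pbij d p" "\<forall>f\<in>set fs. pbij d f" "dim_vec w = d"
  shows "(\<Sum>j\<in>S \<inter> {..<d}. (cmod (vec_index (qtail (pmat d p) (map (pmat d) fs) w) j))\<^sup>2)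
       = (\<Sum>c\<in>{c. fwd p fs c \<in> S} \<inter> {..<d}. (cmod (vec_index w c))\<^sup>2)"
  using assms
proof (induction fs arbitrary: w S)
  case Nil
  then show ?case by simp
next
  case (Cons f fs)
  have pf: "pbij d f" using Cons.prems by auto
  let ?w' = "pmat d f *\<^sub>v (pmat d p *\<^sub>v w)"
  have dw: "dim_vec ?w' = d" by simp
  have "(\<Sum>j\<in>S \<inter> {..<d}. (cmod (vec_index (qtail (pmat d p) (map (pmat d) (f # fs)) w) j))\<^sup>2)
      = (\<Sum>j\<in>S \<inter> {..<d}. (cmod (vec_index (qtail (pmat d p) (map (pmat d) fs) ?w') j))\<^sup>2)"
    by simp
  also have "\<dots> = (\<Sum>c\<in>{c. fwd p fs c \<in> S} \<inter> {..<d}. (cmod (vec_index ?w' c))\<^sup>2)"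
    using Cons.IH[of ?w' S] Cons.prems dw by auto
  also have "\<dots> = (\<Sum>c\<in>{c. f c \<in> {c. fwd p fs c \<in> S}} \<inter> {..<d}. (cmod (vec_index (pmat d p *\<^sub>v w) c))\<^sup>2)"
    by (rule pmat_prob[OF pf], simp)
  also have "\<dots> = (\<Sum>c\<in>{c. p c \<in> {c. f c \<in> {c. fwd p fs c \<in> S}}} \<inter> {..<d}. (cmod (vec_index w c))\<^sup>2)"
    by (rule pmat_prob[OF Cons.prems(1) Cons.prems(3), where S="{c. f c \<in> {c. fwd p fs c \<in> S}}"])
  also have "{c. p c \<in> {c. f c \<in> {c. fwd p fs c \<in> S}}} \<inter> {..<d} = {c. fwd p (f # fs) c \<in> S} \<inter> {..<d}"
    using Cons.prems(1) by (auto simp: pbij_def)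
  finally show ?case .
qed


lemma hh_real_sum:
  fixes w :: "nat \<Rightarrow> real"
  assumes cN: "c * (\<Sum>k<d. (w k)\<^sup>2) = 2" and i: "i < d" and j: "j < d"
  shows "(\<Sum>k<d. ((if k = i then 1 else 0) - c * w k * w i) * ((if k = j then 1 else 0) - c * w k * w j))
         = (if i = j then 1 else 0)"
proof -
  have e: "\<And>k. ((if k = i then 1 else 0) - c * w k * w i) * ((if k = j then 1 else 0) - c * w k * w j)
     = (if k = i then (if k = j then 1 else 0) else 0) - c * w i * (if k = j then w k else 0)
       - c * w j * (if k = i then w k else 0) + (c * c * w i * w j) * (w k)\<^sup>2"
    by (auto simp: algebra_simps power2_eq_square)
  have "(\<Sum>k<d. ((if k = i then 1 else 0) - c * w k * w i) * ((if k = j then 1 else 0) - c * w k * w j))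
      = (\<Sum>k<d. (if k = i then (if k = j then 1 else 0) else 0)) - c * w i * (\<Sum>k<d. (if k = j then w k else 0))
       - c * w j * (\<Sum>k<d. (if k = i then w k else 0)) + (c * c * w i * w j) * (\<Sum>k<d. (w k)\<^sup>2)"
    unfolding e by (simp only: sum.distrib sum_subtractf sum_distrib_left[symmetric])
  also have "\<dots> = (if i = j then 1 else 0) - c * w i * w j - c * w j * w i + (c * c * w i * w j) * (\<Sum>k<d. (w k)\<^sup>2)"
    using i j by (simp add: sum.delta)
  also have "\<dots> = (if i = j then 1 else 0) - 2 * c * w i * w j + (c * w i * w j) * (c * (\<Sum>k<d. (w k)\<^sup>2))"
    by (simp add: algebra_simps)
  also have "\<dots> = (if i = j then 1 else 0)" unfolding cN by (simp add: algebra_simps)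
  finally show ?thesis .
qed

lemma real_mat_unitary:
  fixes H :: "nat \<Rightarrow> nat \<Rightarrow> real"
  assumes orth: "\<And>i j. i < d \<Longrightarrow> j < d \<Longrightarrow> (\<Sum>k<d. H k i * H k j) = (if i = j then 1 else 0)"
  shows "is_unitary d (mat d d (\<lambda>(i,j). complex_of_real (H i j)))"
  unfolding is_unitary_def
proof
  let ?U = "mat d d (\<lambda>(i,j). complex_of_real (H i j))"
  show "?U \<in> carrier_mat d d" by (rule carrier_matI) simp_all
  show "mat_adjoint ?U * ?U = 1\<^sub>m d"
  proof (rule eq_matI)
    fix i j assume i: "i < dim_row (1\<^sub>m d)" and j: "j < dim_col (1\<^sub>m d)"
    then have i: "i < d" and j: "j < d" by auto
    have "(mat_adjoint ?U * ?U) $$ (i,j) = Matrix.row (mat_adjoint ?U) i \<bullet> Matrix.col ?U j"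
      using i j by (intro index_mult_mat) auto
    also have "\<dots> = (\<Sum>k\<in>{0..<d}. vec_index (Matrix.row (mat_adjoint ?U) i) k * vec_index (Matrix.col ?U j) k)"
      unfolding scalar_prod_def by simp
    also have "\<dots> = (\<Sum>k\<in>{0..<d}. complex_of_real (H k i * H k j))"
      by (rule sum.cong[OF refl]) (use i j in \<open>simp add: mat_adjoint_index\<close>)
    also have "\<dots> = complex_of_real (\<Sum>k<d. H k i * H k j)"
      by (simp add: atLeast0LessThan)
    also have "\<dots> = (if i = j then 1 else 0)" using orth[OF i j] by simp
    finally show "(mat_adjoint ?U * ?U) $$ (i,j) = 1\<^sub>m d $$ (i,j)"
      using i j by simp
  qed auto
qed

lemma unitary_first_col:
  fixes r :: "nat \<Rightarrow> real"
  assumes d: "0 < d" and nr: "(\<Sum>k<d. (r k)\<^sup>2) = 1"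
  shows "\<exists>U. is_unitary d U \<and> U *\<^sub>v unit_vec d 0 = Matrix.vec d (\<lambda>j. complex_of_real (r j))"
proof -
  define w where "w k = (if k = 0 then 1 else 0) - r k" for k
  define N where "N = (\<Sum>k<d. (w k)\<^sup>2)"
  define c where "c = 2 / N"
  define H where "H i j = (if i = j then 1 else 0) - c * w i * w j" for i j
  have Nexp: "N = 2 - 2 * r 0"
  proof -
    have "N = (\<Sum>k<d. (if k = 0 then 1 else 0) - 2 * (if k = 0 then r k else 0) + (r k)\<^sup>2)"
      unfolding N_def w_def by (rule sum.cong[OF refl]) (auto simp: power2_eq_square algebra_simps)
    also have "\<dots> = 1 - 2 * r 0 + 1" using d nr by (simp add: sum.distrib sum_subtractf sum_distrib_left[symmetric] sum.delta)
    finally show ?thesis by simp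
  qed
  let ?U = "mat d d (\<lambda>(i,j). complex_of_real (H i j))"
  show ?thesis
  proof (cases "N = 0")
    case True
    then have r0: "r 0 = 1" using Nexp by simp
    have rz: "r k = 0" if "k < d" "k \<noteq> 0" for k
    proof -
      have "(\<Sum>k<d. (r k)\<^sup>2) = (r 0)\<^sup>2 + (\<Sum>k\<in>{..<d} - {0}. (r k)\<^sup>2)"
        using d by (simp add: sum.remove)
      then have s0: "(\<Sum>k\<in>{..<d} - {0}. (r k)\<^sup>2) = 0" using nr r0 by simp
      have "(r k)\<^sup>2 = 0"
        using sum_nonneg_eq_0_iff[of "{..<d} - {0}" "\<lambda>k. (r k)\<^sup>2"] s0 that by simp
      then show ?thesis by simp
    qed
    have "c = 0" unfolding c_def using True by simp
    then have Hid: "H i j = (if i = j then 1 else 0)" for i j unfolding H_def by simp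
    have un: "is_unitary d ?U"
    proof (rule real_mat_unitary)
      fix i j assume "i < d" "j < d"
      have "(\<Sum>k<d. H k i * H k j) = (\<Sum>k<d. if k = i then (if i = j then 1 else 0) else 0)"
        by (rule sum.cong[OF refl]) (auto simp: Hid)
      then show "(\<Sum>k<d. H k i * H k j) = (if i = j then 1 else 0)" using \<open>i < d\<close> by simp
    qed
    have "?U *\<^sub>v unit_vec d 0 = Matrix.vec d (\<lambda>j. complex_of_real (r j))"
    proof (rule eq_vecI)
      fix j assume "j < dim_vec (Matrix.vec d (\<lambda>j. complex_of_real (r j)))"
      then have j: "j < d" by simp
      have "(?U *\<^sub>v unit_vec d 0) $ j = Matrix.row ?U j \<bullet> unit_vec d 0"
        using j by simp
      also have "\<dots> = Matrix.row ?U j $ 0" using d by (intro scalar_prod_right_unit) auto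
      also have "\<dots> = complex_of_real (H j 0)" using d j by simp
      also have "\<dots> = complex_of_real (r j)" using Hid r0 rz j by auto
      finally show "(?U *\<^sub>v unit_vec d 0) $ j = Matrix.vec d (\<lambda>j. complex_of_real (r j)) $ j" using j by simp
    qed simp
    with un show ?thesis by blast
  next
    case False
    have cN: "c * N = 2" unfolding c_def using False by simp
    have un: "is_unitary d ?U"
    proof (rule real_mat_unitary)
      fix i j assume "i < d" "j < d"
      then show "(\<Sum>k<d. H k i * H k j) = (if i = j then 1 else 0)"
        unfolding H_def using hh_real_sum[of c w d i j] cN unfolding N_def by simp
    qed
    have cw0: "c * w 0 = 1" using cN Nexp unfolding w_def by (simp add: algebra_simps)
    have "?U *\<^sub>v unit_vec d 0 = Matrix.vec d (\<lambda>j. complex_of_real (r j))"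
    proof (rule eq_vecI)
      fix j assume "j < dim_vec (Matrix.vec d (\<lambda>j. complex_of_real (r j)))"
      then have j: "j < d" by simp
      have "(?U *\<^sub>v unit_vec d 0) $ j = Matrix.row ?U j \<bullet> unit_vec d 0"
        using j by simp
      also have "\<dots> = Matrix.row ?U j $ 0" using d by (intro scalar_prod_right_unit) auto
      also have "\<dots> = complex_of_real (H j 0)" using d j by simp
      also have "H j 0 = (if j = 0 then 1 else 0) - (c * w 0) * w j" unfolding H_def by simp
      also have "\<dots> = r j" by (simp only: cw0) (simp add: w_def)
      finally show "(?U *\<^sub>v unit_vec d 0) $ j = Matrix.vec d (\<lambda>j. complex_of_real (r j)) $ j" using j by simp
    qed simp
    with un show ?thesis by blast
  qed
qed


instance dtree :: countable by countable_datatype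

fun atn :: "dtree \<Rightarrow> nat \<Rightarrow> nat \<Rightarrow> dtree" where
  "atn T h 0 = T"
| "atn (Leaf b) h (Suc t) = Leaf b"
| "atn (Query i t0 t1) h (Suc t) = atn (if odd h then t1 else t0) (h div 2) t"

fun ev :: "dtree \<Rightarrow> bool list \<Rightarrow> nat \<Rightarrow> dtree" where
  "ev T x 0 = T"
| "ev (Leaf b) x (Suc t) = Leaf b"
| "ev (Query i t0 t1) x (Suc t) = ev (if x ! i then t1 else t0) x t"

definition stepb :: "dtree \<Rightarrow> bool \<Rightarrow> dtree" where
  "stepb T c = (case T of Leaf b \<Rightarrow> Leaf b | Query i t0 t1 \<Rightarrow> if c then t1 else t0)"

fun qidx :: "dtree \<Rightarrow> nat" where
  "qidx (Leaf b) = 0"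
| "qidx (Query i t0 t1) = i"

fun lval :: "dtree \<Rightarrow> bool" where
  "lval (Leaf b) = b"
| "lval (Query i t0 t1) = False"

lemma atn_Suc: "atn T h (Suc t) = stepb (atn T h t) (odd (h div 2^t))"
proof (induction t arbitrary: T h)
  case 0
  then show ?case by (cases T) (auto simp: stepb_def)
next
  case (Suc t)
  show ?case
  proof (cases T)
    case (Leaf b) then show ?thesis by (simp add: stepb_def)
  next
    case (Query i t0 t1)
    let ?c = "if odd h then t1 else t0"
    have "atn T h (Suc (Suc t)) = atn ?c (h div 2) (Suc t)" using Query by simp
    also have "\<dots> = stepb (atn ?c (h div 2) t) (odd (h div 2 div 2^t))" by (rule Suc.IH)
    also have "h div 2 div 2^t = h div 2^(Suc t)" by (simp add: div_mult2_eq)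
    also have "atn ?c (h div 2) t = atn T h (Suc t)" using Query by simp
    finally show ?thesis .
  qed
qed

lemma ev_Suc: "ev T x (Suc t) = stepb (ev T x t) (x ! qidx (ev T x t))"
proof (induction t arbitrary: T)
  case 0
  then show ?case by (cases T) (auto simp: stepb_def)
next
  case (Suc t)
  show ?case
  proof (cases T)
    case (Leaf b) then show ?thesis by (simp add: stepb_def)
  next
    case (Query i t0 t1)
    let ?c = "if x ! i then t1 else t0"
    have "ev T x (Suc (Suc t)) = ev ?c x (Suc t)" using Query by simp
    also have "\<dots> = stepb (ev ?c x t) (x ! qidx (ev ?c x t))" by (rule Suc.IH)
    also have "ev ?c x t = ev T x (Suc t)" using Query by simp
    finally show ?thesis .
  qed
qed

lemma atn_cong_mod: "h mod 2^t = h' mod 2^t \<Longrightarrow> atn T h t = atn T h' t"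
proof (induction t arbitrary: T h h')
  case 0
  then show ?case by simp
next
  case (Suc t)
  have o: "odd h = odd h'"
  proof -
    have "h mod 2 = h mod 2^Suc t mod 2" by (simp add: mod_mod_cancel)
    also have "\<dots> = h' mod 2^Suc t mod 2" using Suc.prems by simp
    also have "\<dots> = h' mod 2" by (simp add: mod_mod_cancel)
    finally show ?thesis by (simp add: odd_iff_mod_2_eq_one)
  qed
  have m: "(h div 2) mod 2^t = (h' div 2) mod 2^t"
  proof -
    have "h mod 2^Suc t = h mod 2 + 2 * ((h div 2) mod 2^t)"
      by (simp add: mod_mult2_eq)
    moreover have "h' mod 2^Suc t = h' mod 2 + 2 * ((h' div 2) mod 2^t)"
      by (simp add: mod_mult2_eq)
    ultimately show ?thesis using Suc.prems o by (auto simp: odd_iff_mod_2_eq_one even_iff_mod_2_eq_zero)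
  qed
  show ?case
  proof (cases T)
    case (Leaf b) then show ?thesis by simp
  next
    case (Query i t0 t1)
    then show ?thesis using Suc.IH[OF m] o by simp
  qed
qed

lemma ev_depth: "dt_depth T \<le> t \<Longrightarrow> ev T x t = Leaf (dt_eval T x)"
proof (induction T arbitrary: t)
  case (Leaf b)
  then show ?case by (cases t) auto
next
  case (Query i t0 t1)
  then obtain t' where t: "t = Suc t'" by (cases t) auto
  then show ?case using Query by auto
qed

lemma ev_vars: "dt_vars (ev T x t) \<subseteq> dt_vars T"
proof (induction t arbitrary: T)
  case 0
  then show ?case by simp
next
  case (Suc t)
  then show ?case by (cases T) auto
qed

lemma qidx_vars: "(\<exists>i t0 t1. T = Query i t0 t1) \<Longrightarrow> qidx T \<in> dt_vars T"
  by auto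

definition repl :: "nat \<Rightarrow> nat \<Rightarrow> nat \<Rightarrow> nat" where
  "repl h t b = h div 2^(Suc t) * 2^(Suc t) + b * 2^t + h mod 2^t"

lemma decomp: fixes h :: nat shows "h = h div 2^(Suc t) * 2^(Suc t) + h div 2^t mod 2 * 2^t + h mod 2^t"
proof -
  have "h = h div 2^t * 2^t + h mod 2^t" by (rule div_mult_mod_eq[symmetric])
  also have "h div 2^t = h div 2^t div 2 * 2 + h div 2^t mod 2" by (rule div_mult_mod_eq[symmetric])
  also have "h div 2^t div 2 = h div 2^(Suc t)" by (metis div_mult2_eq power_Suc2)
  finally show ?thesis by (simp add: algebra_simps)
qed

lemma repl_mod: "b < 2 \<Longrightarrow> repl h t b mod 2^t = h mod 2^t"
proof -
  assume b: "b < 2"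
  have "repl h t b = (h div 2^(Suc t) * 2 + b) * 2^t + h mod 2^t"
    unfolding repl_def by (simp add: algebra_simps)
  then show ?thesis by simp
qed

lemma repl_div: "b < 2 \<Longrightarrow> repl h t b div 2^t = h div 2^(Suc t) * 2 + b"
proof -
  assume b: "b < 2"
  have "repl h t b = (h div 2^(Suc t) * 2 + b) * 2^t + h mod 2^t"
    unfolding repl_def by (simp add: algebra_simps)
  then show ?thesis by simp
qed

lemma repl_bit: "b < 2 \<Longrightarrow> repl h t b div 2^t mod 2 = b"
  by (simp add: repl_div)

lemma repl_hi: "b < 2 \<Longrightarrow> repl h t b div 2^(Suc t) = h div 2^(Suc t)"
proof -
  assume b: "b < 2"
  have "repl h t b div 2^(Suc t) = repl h t b div 2^t div 2" by (metis div_mult2_eq power_Suc2)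
  also have "\<dots> = h div 2^(Suc t)" using b by (simp add: repl_div)
  finally show ?thesis .
qed

lemma repl_repl: "b < 2 \<Longrightarrow> repl (repl h t b) t (h div 2^t mod 2) = h"
proof -
  assume b: "b < 2"
  have "repl (repl h t b) t (h div 2^t mod 2) = h div 2^(Suc t) * 2^(Suc t) + h div 2^t mod 2 * 2^t + h mod 2^t"
    unfolding repl_def[of "repl h t b"] by (simp only: repl_hi[OF b] repl_mod[OF b])
  also have "\<dots> = h" using decomp[of h t] by simp
  finally show ?thesis .
qed

lemma repl_less: assumes "h < 2^q" "t < q" "b < 2" shows "repl h t b < 2^q"
proof -
  have qq: "q - Suc t + Suc t = q" using assms(2) by simp
  have e: "2^(q - Suc t) * 2^(Suc t) = (2::nat)^q" by (metis qq power_add)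
  have "h div 2^(Suc t) < 2^(q - Suc t)"
    by (rule less_mult_imp_div_less) (use assms(1) e in simp)
  then have a: "h div 2^(Suc t) + 1 \<le> 2^(q - Suc t)" by simp
  have "repl h t b < h div 2^(Suc t) * 2^(Suc t) + 2^(Suc t)"
  proof -
    have "b * 2^t + h mod 2^t < 2 * 2^t"
    proof -
      have m1: "h mod 2^t < 2^t" by simp
      have m2: "b * 2^t \<le> 2^t" using assms(3) by (cases b) auto
      from m1 m2 show ?thesis by linarith
    qed
    then show ?thesis unfolding repl_def by simp
  qed
  also have "\<dots> = (h div 2^(Suc t) + 1) * 2^(Suc t)" by (simp add: algebra_simps)
  also have "\<dots> \<le> 2^(q - Suc t) * 2^(Suc t)" using a by (intro mult_right_mono) auto
  also have "\<dots> = 2^q" by (rule e)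
  finally show ?thesis .
qed

lemma repl_low: "h < 2^t \<Longrightarrow> repl h t b = h + b * 2^t"
  unfolding repl_def by simp

lemma low_bit: "(h::nat) < 2^t \<Longrightarrow> h div 2^t mod 2 = 0"
  by simp


definition qi :: "nat \<Rightarrow> dtree \<Rightarrow> nat" where
  "qi n T = (if qidx T < n then qidx T else 0)"

lemma qi_lt: "0 < n \<Longrightarrow> qi n T < n"
  by (simp add: qi_def)

lemma stepb_qi: "dt_vars T \<subseteq> {..<n} \<Longrightarrow> stepb T (x ! qi n T) = stepb T (x ! qidx T)"
  by (cases T) (auto simp: qi_def stepb_def)

fun treesb :: "nat \<Rightarrow> nat \<Rightarrow> dtree set" where
  "treesb n 0 = range Leaf"
| "treesb n (Suc q) = range Leaf \<union> (\<lambda>(i,a,b). Query i a b) ` ({..<n} \<times> treesb n q \<times> treesb n q)"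

lemma finite_treesb: "finite (treesb n q)"
  by (induction q) auto

lemma in_treesb: "dt_depth T \<le> q \<Longrightarrow> dt_vars T \<subseteq> {..<n} \<Longrightarrow> T \<in> treesb n q"
proof (induction T arbitrary: q)
  case (Leaf b)
  then show ?case by (cases q) auto
next
  case (Query i t0 t1)
  then obtain q' where q: "q = Suc q'" by (cases q) auto
  have "t0 \<in> treesb n q'" "t1 \<in> treesb n q'" using Query q by auto
  moreover have "i < n" using Query by auto
  ultimately have "(i, t0, t1) \<in> {..<n} \<times> treesb n q' \<times> treesb n q'" by auto
  then have "Query i t0 t1 \<in> (\<lambda>(i,a,b). Query i a b) ` ({..<n} \<times> treesb n q' \<times> treesb n q')"
    by force
  then show ?case using q by simp
qed

lemma finite_supp: "cl_alg n q D \<Longrightarrow> finite (set_pmf D)"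
  unfolding cl_alg_def
  by (rule finite_subset[OF _ finite_treesb[of n q]]) (auto intro: in_treesb)

definition enc :: "nat \<Rightarrow> nat \<Rightarrow> nat \<Rightarrow> nat \<Rightarrow> nat" where
  "enc m i b z = i * (2 * m) + b * m + z"

lemma enc_div: "b < 2 \<Longrightarrow> z < m \<Longrightarrow> enc m i b z div (2 * m) = i"
  and enc_b: "b < 2 \<Longrightarrow> z < m \<Longrightarrow> enc m i b z mod (2 * m) div m = b"
  and enc_z: "b < 2 \<Longrightarrow> z < m \<Longrightarrow> enc m i b z mod m = z"
proof -
  assume b: "b < 2" and z: "z < m"
  have w: "b * m + z < 2 * m" using b z by (cases b) auto
  have e: "enc m i b z = (b * m + z) + i * (2 * m)" unfolding enc_def by simp
  then show d: "enc m i b z div (2 * m) = i" using w by simp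
  have "enc m i b z mod (2 * m) = b * m + z" using w by (subst e) simp
  then show "enc m i b z mod (2 * m) div m = b" using z by simp
  have "enc m i b z = z + (i * 2 + b) * m" unfolding enc_def by (simp add: algebra_simps)
  then show "enc m i b z mod m = z" using z by simp
qed

lemma enc_lt: "i < n \<Longrightarrow> b < 2 \<Longrightarrow> z < m \<Longrightarrow> enc m i b z < n * (2 * m)"
proof -
  assume i: "i < n" and b: "b < 2" and z: "z < m"
  have w: "b * m + z < 2 * m" using b z by (cases b) auto
  have "enc m i b z < i * (2 * m) + 2 * m" using w unfolding enc_def by simp
  also have "\<dots> = (i + 1) * (2 * m)" by simp
  also have "\<dots> \<le> n * (2 * m)" using i by (intro mult_right_mono) auto
  finally show ?thesis .
qed

lemma enc_decomp: "0 < m \<Longrightarrow> e = enc m (e div (2 * m)) (e mod (2 * m) div m) (e mod m)"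
  and dec_b_lt: "0 < m \<Longrightarrow> e mod (2 * m) div m < 2"
proof -
  assume m: "0 < m"
  have "e mod (2 * m) < 2 * m" using m by simp
  then show "e mod (2 * m) div m < 2" using m by (simp add: div_less_iff_less_mult mult.commute)
  have "e mod (2 * m) = e mod (2 * m) div m * m + e mod (2 * m) mod m" by simp
  also have "e mod (2 * m) mod m = e mod m" by (simp add: mod_mod_cancel)
  finally have "e mod (2 * m) = e mod (2 * m) div m * m + e mod m" .
  moreover have "e = e div (2 * m) * (2 * m) + e mod (2 * m)" by (rule div_mult_mod_eq[symmetric])
  ultimately show "e = enc m (e div (2 * m)) (e mod (2 * m) div m) (e mod m)"
    unfolding enc_def by linarith
qed

lemma dec_i_lt: "(e::nat) < n * (2 * m) \<Longrightarrow> e div (2 * m) < n"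
  by (rule less_mult_imp_div_less)

lemma qop_enc:
  assumes "b < 2" "z < m"
  shows "qop_perm m x (enc m i b z) = enc m i (if x ! i then 1 - b else b) z"
proof -
  have "b = 0 \<or> b = 1" using assms by auto
  then show ?thesis
    using assms unfolding qop_perm_def by (auto simp: enc_div enc_b, auto simp: enc_def)
qed

lemma pbij_qop:
  assumes m: "0 < m"
  shows "pbij (n * (2 * m)) (qop_perm m x)"
proof -
  have main: "qop_perm m x e < n * (2 * m) \<and> qop_perm m x (qop_perm m x e) = e"
    if e: "e < n * (2 * m)" for e
  proof -
    let ?i = "e div (2 * m)" and ?b = "e mod (2 * m) div m" and ?z = "e mod m"
    have ed: "e = enc m ?i ?b ?z" by (rule enc_decomp[OF m])
    have b: "?b < 2" by (rule dec_b_lt[OF m])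
    have z: "?z < m" using m by simp
    have i: "?i < n" using e by (rule dec_i_lt)
    let ?b' = "if x ! ?i then 1 - ?b else ?b"
    have b': "?b' < 2" using b by auto
    have q1: "qop_perm m x e = enc m ?i ?b' ?z" by (subst ed, rule qop_enc[OF b z])
    have q2: "qop_perm m x (enc m ?i ?b' ?z) = enc m ?i (if x ! ?i then 1 - ?b' else ?b') ?z"
      by (rule qop_enc[OF b' z])
    have "(if x ! ?i then 1 - ?b' else ?b') = ?b" using b by auto
    then have "qop_perm m x (qop_perm m x e) = e" using q1 q2 ed by simp
    moreover have "qop_perm m x e < n * (2 * m)" using q1 enc_lt[OF i b' z] by simp
    ultimately show ?thesis by simp
  qed
  show ?thesis unfolding pbij_def
  proof
    show "inj_on (qop_perm m x) {..<n * (2 * m)}"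
      by (rule inj_onI) (metis lessThan_iff main)
    show "qop_perm m x ` {..<n * (2 * m)} \<subseteq> {..<n * (2 * m)}" using main by auto
  qed
qed


lemma transpose_lt: "a < n \<Longrightarrow> b < n \<Longrightarrow> i < n \<Longrightarrow> Transposition.transpose a b i < n"
  using transpose_eq_iff[of a b i "Transposition.transpose a b i"] by auto

locale sim =
  fixes n q :: nat and D :: "dtree pmf"
  assumes alg: "cl_alg n q D" and npos: "0 < n"
begin

definition "R = Suc (Max (to_nat ` set_pmf D))"
definition "m = R * 2^q"
definition "G t r h = qi n (atn (from_nat r) h t)"
definition "stf t e = (let i = e div (2*m); b = e mod (2*m) div m; z = e mod m; r = z mod R; h = z div R;
    c = h div 2^t mod 2; h' = repl h t b
  in enc m (Transposition.transpose (G t r h) (G (Suc t) r h') i) c (r + R * h'))"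
definition "amp e = (let i = e div (2*m); b = e mod (2*m) div m; z = e mod m; r = z mod R; h = z div R
   in if b = 0 \<and> h = 0 \<and> i = G 0 r 0 \<and> r \<in> to_nat ` set_pmf D then sqrt (pmf D (from_nat r)) else 0)"
definition "st r = enc m (G 0 r 0) 0 r"
definition "Sset = {e. lval (atn (from_nat (e mod m mod R)) (e mod m div R) q)}"

lemma fin: "finite (set_pmf D)" by (rule finite_supp[OF alg])

lemma R_pos: "0 < R" unfolding R_def by simp

lemma r_lt: "T \<in> set_pmf D \<Longrightarrow> to_nat T < R"
  unfolding R_def using fin by (simp add: le_imp_less_Suc)

lemma m_pos: "0 < m" unfolding m_def using R_pos by simp

lemma G_lt: "G t r h < n" unfolding G_def by (rule qi_lt[OF npos])

lemma z_lt: "r < R \<Longrightarrow> h < 2^q \<Longrightarrow> r + R * h < m"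
proof -
  assume r: "r < R" and h: "h < 2^q"
  have "r + R * h < R + R * h" using r by simp
  also have "\<dots> = R * (h + 1)" by (simp add: algebra_simps)
  also have "\<dots> \<le> R * 2^q" using h by (intro mult_left_mono) auto
  finally show ?thesis unfolding m_def .
qed

lemma zdec: "r < R \<Longrightarrow> (r + R * h) mod R = r" "r < R \<Longrightarrow> (r + R * h) div R = h"
  by simp_all

lemma z_decomp: "z = z mod R + R * (z div R)"
  by simp

lemma h_lt: "z < m \<Longrightarrow> z div R < 2^q"
  unfolding m_def by (simp add: less_mult_imp_div_less mult.commute)

lemma stf_enc:
  assumes t: "t < q" and i: "i < n" and b: "b < 2" and r: "r < R" and h: "h < 2^q"
  shows "stf t (enc m i b (r + R * h)) = enc m (Transposition.transpose (G t r h) (G (Suc t) r (repl h t b)) i)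
                                    (h div 2^t mod 2) (r + R * repl h t b)"
proof -
  have z: "r + R * h < m" by (rule z_lt[OF r h])
  show ?thesis unfolding stf_def Let_def using enc_div[OF b z] enc_b[OF b z] enc_z[OF b z] zdec[OF r]
    by simp
qed

lemma stf_props:
  assumes t: "t < q" and e: "e < n * (2 * m)"
  shows "\<exists>i b r h. e = enc m i b (r + R * h) \<and> i < n \<and> b < 2 \<and> r < R \<and> h < 2^q"
proof -
  let ?i = "e div (2 * m)" and ?b = "e mod (2 * m) div m" and ?z = "e mod m"
  have ed: "e = enc m ?i ?b ?z" by (rule enc_decomp[OF m_pos])
  have b: "?b < 2" by (rule dec_b_lt[OF m_pos])
  have z: "?z < m" using m_pos by simp
  have i: "?i < n" using e by (rule dec_i_lt)
  have "?z = ?z mod R + R * (?z div R)" by (rule z_decomp)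
  moreover have "?z mod R < R" using R_pos by simp
  moreover have "?z div R < 2^q" using z by (rule h_lt)
  ultimately show ?thesis using ed i b by metis
qed

lemma pbij_stf:
  assumes t: "t < q"
  shows "pbij (n * (2 * m)) (stf t)"
  unfolding pbij_def
proof
  have img: "stf t (enc m i b (r + R * h)) < n * (2 * m)"
    if "i < n" "b < 2" "r < R" "h < 2^q" for i b r h
  proof -
    have h': "repl h t b < 2^q" by (rule repl_less[OF that(4) t that(2)])
    have "Transposition.transpose (G t r h) (G (Suc t) r (repl h t b)) i < n"
      using that(1) G_lt by (intro transpose_lt)
    moreover have "h div 2^t mod 2 < 2" by simp
    moreover have "r + R * repl h t b < m" by (rule z_lt[OF that(3) h'])
    ultimately show ?thesis unfolding stf_enc[OF t that] by (rule enc_lt)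
  qed
  show "stf t ` {..<n * (2 * m)} \<subseteq> {..<n * (2 * m)}"
  proof
    fix y assume "y \<in> stf t ` {..<n * (2 * m)}"
    then obtain e where e: "e < n * (2 * m)" and y: "y = stf t e" by auto
    from stf_props[OF t e] obtain i b r h where "e = enc m i b (r + R * h)" "i < n" "b < 2" "r < R" "h < 2^q"
      by blast
    then show "y \<in> {..<n * (2 * m)}" using img y by auto
  qed
  show "inj_on (stf t) {..<n * (2 * m)}"
  proof (rule inj_onI)
    fix e1 e2 assume e1: "e1 \<in> {..<n * (2 * m)}" and e2: "e2 \<in> {..<n * (2 * m)}" and eq: "stf t e1 = stf t e2"
    have e1': "e1 < n * (2 * m)" using e1 by simp
    obtain i1 b1 r1 h1 where d1: "e1 = enc m i1 b1 (r1 + R * h1)" "i1 < n" "b1 < 2" "r1 < R" "h1 < 2^q"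
      using stf_props[OF t e1'] by blast
    have e2': "e2 < n * (2 * m)" using e2 by simp
    obtain i2 b2 r2 h2 where d2: "e2 = enc m i2 b2 (r2 + R * h2)" "i2 < n" "b2 < 2" "r2 < R" "h2 < 2^q"
      using stf_props[OF t e2'] by blast
    let ?h1 = "repl h1 t b1" and ?h2 = "repl h2 t b2"
    have h1': "?h1 < 2^q" by (rule repl_less[OF d1(5) t d1(3)])
    have h2': "?h2 < 2^q" by (rule repl_less[OF d2(5) t d2(3)])
    have z1: "r1 + R * ?h1 < m" by (rule z_lt[OF d1(4) h1'])
    have z2: "r2 + R * ?h2 < m" by (rule z_lt[OF d2(4) h2'])
    have c1: "h1 div 2^t mod 2 < 2" and c2: "h2 div 2^t mod 2 < 2" by simp_all
    let ?T1 = "Transposition.transpose (G t r1 h1) (G (Suc t) r1 ?h1) i1"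
    let ?T2 = "Transposition.transpose (G t r2 h2) (G (Suc t) r2 ?h2) i2"
    have E: "enc m ?T1 (h1 div 2^t mod 2) (r1 + R * ?h1) = enc m ?T2 (h2 div 2^t mod 2) (r2 + R * ?h2)"
      using eq unfolding d1(1) d2(1) stf_enc[OF t d1(2-5)] stf_enc[OF t d2(2-5)] .
    have Ti: "?T1 = ?T2" using enc_div[OF c1 z1] enc_div[OF c2 z2] E by metis
    have Tc: "h1 div 2^t mod 2 = h2 div 2^t mod 2" using enc_b[OF c1 z1] enc_b[OF c2 z2] E by metis
    have Tz: "r1 + R * ?h1 = r2 + R * ?h2" using enc_z[OF c1 z1] enc_z[OF c2 z2] E by metis
    have r: "r1 = r2" using Tz zdec(1)[OF d1(4), of ?h1] zdec(1)[OF d2(4), of ?h2] by metis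
    have hh: "?h1 = ?h2" using Tz zdec(2)[OF d1(4), of ?h1] zdec(2)[OF d2(4), of ?h2] by metis
    have b: "b1 = b2" using repl_bit[OF d1(3), of h1 t] repl_bit[OF d2(3), of h2 t] hh by metis
    have h: "h1 = h2" using repl_repl[OF d1(3), of h1 t] repl_repl[OF d2(3), of h2 t] hh Tc by metis
    have i: "i1 = i2" using Ti r h hh by (metis transpose_eq_imp_eq)
    show "e1 = e2" using d1(1) d2(1) i b r h by simp
  qed
qed


definition "Inv T x t e \<longleftrightarrow> (\<exists>h. h < 2^t \<and> atn T h t = ev T x t \<and> e = enc m (G t (to_nat T) h) 0 (to_nat T + R * h))"

lemma vars_supp: "T \<in> set_pmf D \<Longrightarrow> dt_vars T \<subseteq> {..<n}"
  using alg unfolding cl_alg_def by auto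

lemma depth_supp: "T \<in> set_pmf D \<Longrightarrow> dt_depth T \<le> q"
  using alg unfolding cl_alg_def by auto

lemma pow_mono_lt: "h < 2^t \<Longrightarrow> t \<le> q \<Longrightarrow> h < (2::nat)^q"
  by (meson less_le_trans one_le_numeral power_increasing)

lemma Inv_step:
  assumes T: "T \<in> set_pmf D" and t: "t < q" and I: "Inv T x t e"
  shows "Inv T x (Suc t) (stf t (qop_perm m x e))"
proof -
  let ?r = "to_nat T"
  from I obtain h where h: "h < 2^t" and at: "atn T h t = ev T x t"
    and e: "e = enc m (G t ?r h) 0 (?r + R * h)" unfolding Inv_def by blast
  have r: "?r < R" by (rule r_lt[OF T])
  have hq: "h < 2^q" using h t by (intro pow_mono_lt) auto
  have z: "?r + R * h < m" by (rule z_lt[OF r hq])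
  let ?i = "G t ?r h"
  let ?a = "if x ! ?i then 1 else 0 :: nat"
  have a: "?a < 2" by simp
  have q1: "qop_perm m x e = enc m ?i ?a (?r + R * h)"
    unfolding e by (subst qop_enc) (use z in auto)
  have c0: "h div 2^t mod 2 = 0" using h by simp
  let ?h' = "repl h t ?a"
  have h'eq: "?h' = h + ?a * 2^t" by (rule repl_low[OF h])
  have q2: "stf t (qop_perm m x e) = enc m (G (Suc t) ?r ?h') 0 (?r + R * ?h')"
    unfolding q1 stf_enc[OF t G_lt a r hq] c0 by (simp add: transpose_apply_first)
  have h'lt: "?h' < 2^Suc t" unfolding h'eq using h by auto
  have mod: "?h' mod 2^t = h mod 2^t" by (rule repl_mod[OF a])
  have atn_eq: "atn T ?h' t = ev T x t" using atn_cong_mod[OF mod] at by simp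
  have odd_eq: "odd (?h' div 2^t) = x ! ?i" unfolding h'eq using h by simp
  have Gi: "?i = qi n (ev T x t)" unfolding G_def using at by simp
  have vs: "dt_vars (ev T x t) \<subseteq> {..<n}" using ev_vars vars_supp[OF T] by blast
  have "atn T ?h' (Suc t) = stepb (atn T ?h' t) (odd (?h' div 2^t))" by (rule atn_Suc)
  also have "\<dots> = stepb (ev T x t) (x ! qi n (ev T x t))" using atn_eq odd_eq Gi by simp
  also have "\<dots> = stepb (ev T x t) (x ! qidx (ev T x t))" by (rule stepb_qi[OF vs])
  also have "\<dots> = ev T x (Suc t)" by (rule ev_Suc[symmetric])
  finally have "atn T ?h' (Suc t) = ev T x (Suc t)" .
  then show ?thesis unfolding Inv_def q2 using h'lt by blast
qed

lemma Inv_iter: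
  assumes T: "T \<in> set_pmf D"
  shows "t \<le> q \<Longrightarrow> Inv T x t e \<Longrightarrow> Inv T x q (fwd (qop_perm m x) (map stf [t..<q]) e)"
proof (induction "q - t" arbitrary: t e)
  case 0
  then have "t = q" by simp
  then show ?case using 0 by simp
next
  case (Suc k)
  then have t: "t < q" by simp
  have up: "[t..<q] = t # [Suc t..<q]" using t by (simp add: upt_conv_Cons)
  have "Inv T x q (fwd (qop_perm m x) (map stf [Suc t..<q]) (stf t (qop_perm m x e)))"
    using Suc.hyps(1)[of "Suc t" "stf t (qop_perm m x e)"] Suc.hyps(2) t Inv_step[OF T t Suc.prems(2)] by simp
  then show ?case unfolding up by simp
qed

lemma from_to: "from_nat (to_nat (T::dtree)) = T" by simp

lemma Inv_final:
  assumes T: "T \<in> set_pmf D" and I: "Inv T x q e"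
  shows "e \<in> Sset \<longleftrightarrow> dt_eval T x"
proof -
  let ?r = "to_nat T"
  from I obtain h where h: "h < 2^q" and at: "atn T h q = ev T x q"
    and e: "e = enc m (G q ?r h) 0 (?r + R * h)" unfolding Inv_def by blast
  have r: "?r < R" by (rule r_lt[OF T])
  have z: "?r + R * h < m" by (rule z_lt[OF r h])
  have em: "e mod m = ?r + R * h" unfolding e by (rule enc_z) (use z in auto)
  have "atn (from_nat (e mod m mod R)) (e mod m div R) q = atn T h q"
    unfolding em zdec[OF r] from_to ..
  also have "\<dots> = Leaf (dt_eval T x)" unfolding at by (rule ev_depth[OF depth_supp[OF T]])
  finally show ?thesis unfolding Sset_def by simp
qed

lemma Inv_start: "Inv T x 0 (st (to_nat T))"
  unfolding Inv_def st_def by (rule exI[of _ 0]) simp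

lemma st_lt: "T \<in> set_pmf D \<Longrightarrow> st (to_nat T) < n * (2 * m)"
  unfolding st_def using r_lt[of T] R_pos
  by (intro enc_lt G_lt) (auto simp: m_def intro: less_le_trans[of _ R] )

lemma st_mod: "T \<in> set_pmf D \<Longrightarrow> st (to_nat T) mod m = to_nat T"
proof -
  assume T: "T \<in> set_pmf D"
  have "to_nat T < m" using z_lt[OF r_lt[OF T], of 0] by simp
  then show ?thesis unfolding st_def by (intro enc_z) auto
qed

lemma amp_st: "T \<in> set_pmf D \<Longrightarrow> amp (st (to_nat T)) = sqrt (pmf D T)"
proof -
  assume T: "T \<in> set_pmf D"
  have z: "to_nat T < m" using z_lt[OF r_lt[OF T], of 0] by simp
  have r: "to_nat T < R" by (rule r_lt[OF T])
  show ?thesis unfolding amp_def Let_def st_def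
    using enc_div[of 0 "to_nat T" m] enc_b[of 0 "to_nat T" m] enc_z[of 0 "to_nat T" m] z r T by simp
qed

lemma amp_zero: "e \<notin> st ` to_nat ` set_pmf D \<Longrightarrow> amp e = 0"
proof (rule ccontr)
  assume ne: "e \<notin> st ` to_nat ` set_pmf D" and nz: "amp e \<noteq> 0"
  let ?i = "e div (2 * m)" and ?b = "e mod (2 * m) div m" and ?z = "e mod m"
  have c: "?b = 0" "?z div R = 0" "?i = G 0 (?z mod R) 0" "?z mod R \<in> to_nat ` set_pmf D"
    using nz unfolding amp_def Let_def by (auto split: if_splits)
  have zz: "?z = ?z mod R" using z_decomp[of ?z] c(2) by simp
  have "e = enc m ?i ?b ?z" by (rule enc_decomp[OF m_pos])
  also have "\<dots> = st (?z mod R)" unfolding st_def using c zz by simp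
  finally have "e \<in> st ` to_nat ` set_pmf D" using c(4) by auto
  then show False using ne by simp
qed

lemma amp_sum:
  "(\<Sum>c\<in>A \<inter> {..<n * (2 * m)}. (amp c)\<^sup>2) = (\<Sum>T\<in>{T\<in>set_pmf D. st (to_nat T) \<in> A}. pmf D T)"
proof -
  let ?B = "(\<lambda>T. st (to_nat T)) ` {T\<in>set_pmf D. st (to_nat T) \<in> A}"
  have sub: "?B \<subseteq> A \<inter> {..<n * (2 * m)}" using st_lt by auto
  have "(\<Sum>c\<in>A \<inter> {..<n * (2 * m)}. (amp c)\<^sup>2) = (\<Sum>c\<in>?B. (amp c)\<^sup>2)"
  proof (rule sum.mono_neutral_right)
    show "finite (A \<inter> {..<n * (2 * m)})" by simp
    show "?B \<subseteq> A \<inter> {..<n * (2 * m)}" by (rule sub)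
    show "\<forall>c\<in>A \<inter> {..<n * (2 * m)} - ?B. (amp c)\<^sup>2 = 0"
    proof
      fix c assume "c \<in> A \<inter> {..<n * (2 * m)} - ?B"
      then have "c \<notin> st ` to_nat ` set_pmf D" by auto
      then show "(amp c)\<^sup>2 = 0" using amp_zero by simp
    qed
  qed
  also have "\<dots> = (\<Sum>T\<in>{T\<in>set_pmf D. st (to_nat T) \<in> A}. (amp (st (to_nat T)))\<^sup>2)"
  proof -
    have inj: "inj_on (\<lambda>T. st (to_nat T)) {T \<in> set_pmf D. st (to_nat T) \<in> A}"
    proof (rule inj_onI)
      fix T1 T2 assume T1: "T1 \<in> {T \<in> set_pmf D. st (to_nat T) \<in> A}" and T2: "T2 \<in> {T \<in> set_pmf D. st (to_nat T) \<in> A}"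
        and eq: "st (to_nat T1) = st (to_nat T2)"
      have "to_nat T1 = st (to_nat T1) mod m" using st_mod[of T1] T1 by simp
      also have "\<dots> = st (to_nat T2) mod m" using eq by simp
      also have "\<dots> = to_nat T2" using st_mod[of T2] T2 by simp
      finally show "T1 = T2" by simp
    qed
    show ?thesis using sum.reindex[OF inj, of "\<lambda>c. (amp c)\<^sup>2"] by (simp add: comp_def)
  qed
  also have "\<dots> = (\<Sum>T\<in>{T\<in>set_pmf D. st (to_nat T) \<in> A}. pmf D T)"
    by (rule sum.cong[OF refl]) (simp add: amp_st)
  finally show ?thesis .
qed


lemma qdim_eq: "qdim n m = n * (2 * m)" by (simp add: qdim_def)

lemma amp_norm: "(\<Sum>k<n * (2 * m). (amp k)\<^sup>2) = 1"
proof -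
  have "(\<Sum>k<n * (2 * m). (amp k)\<^sup>2) = (\<Sum>c\<in>UNIV \<inter> {..<n * (2 * m)}. (amp c)\<^sup>2)" by simp
  also have "\<dots> = (\<Sum>T\<in>{T\<in>set_pmf D. st (to_nat T) \<in> UNIV}. pmf D T)" by (rule amp_sum)
  also have "\<dots> = sum (pmf D) (set_pmf D)" by simp
  also have "\<dots> = 1" using fin by (rule sum_pmf_eq_1) simp
  finally show ?thesis .
qed

lemma d_pos: "0 < n * (2 * m)" using npos m_pos by simp

lemma exU0: "\<exists>U. is_unitary (n * (2 * m)) U \<and> U *\<^sub>v unit_vec (n * (2 * m)) 0 = Matrix.vec (n * (2 * m)) (\<lambda>j. complex_of_real (amp j))"
  by (rule unitary_first_col[OF d_pos amp_norm])

definition "U0 = (SOME U. is_unitary (n * (2 * m)) U \<and> U *\<^sub>v unit_vec (n * (2 * m)) 0 = Matrix.vec (n * (2 * m)) (\<lambda>j. complex_of_real (amp j)))"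

lemma U0: "is_unitary (n * (2 * m)) U0" "U0 *\<^sub>v unit_vec (n * (2 * m)) 0 = Matrix.vec (n * (2 * m)) (\<lambda>j. complex_of_real (amp j))"
  using someI_ex[OF exU0] unfolding U0_def by blast+

definition "Us = U0 # map (pmat (n * (2 * m))) (map stf [0..<q])"

lemma Us_alg: "q_alg n q m Us"
  unfolding q_alg_def Us_def qdim_eq
  using m_pos U0(1) pmat_unitary pbij_stf by auto

lemma Us_prob: "q_prob1 n m Us Sset x = measure_pmf.prob D {T. dt_eval T x}"
proof -
  let ?d = "n * (2 * m)"
  let ?fs = "map stf [0..<q]"
  let ?p = "qop_perm m x"
  let ?u = "Matrix.vec ?d (\<lambda>j. complex_of_real (amp j))"
  have "q_prob1 n m Us Sset x = (\<Sum>j\<in>Sset \<inter> {..<?d}. (cmod (vec_index (qtail (pmat ?d ?p) (map (pmat ?d) ?fs) ?u) j))\<^sup>2)"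
    unfolding q_prob1_def Let_def qdim_eq qop_pmat Us_def qrun_qtail U0(2) by simp
  also have "\<dots> = (\<Sum>c\<in>{c. fwd ?p ?fs c \<in> Sset} \<inter> {..<?d}. (cmod (vec_index ?u c))\<^sup>2)"
    by (rule qtail_prob) (use pbij_qop[OF m_pos] pbij_stf in auto)
  also have "\<dots> = (\<Sum>c\<in>{c. fwd ?p ?fs c \<in> Sset} \<inter> {..<?d}. (amp c)\<^sup>2)"
    by (rule sum.cong[OF refl]) auto
  also have "\<dots> = (\<Sum>T\<in>{T\<in>set_pmf D. st (to_nat T) \<in> {c. fwd ?p ?fs c \<in> Sset}}. pmf D T)"
    by (rule amp_sum)
  also have "{T\<in>set_pmf D. st (to_nat T) \<in> {c. fwd ?p ?fs c \<in> Sset}} = set_pmf D \<inter> {T. dt_eval T x}"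
  proof -
    have "fwd ?p ?fs (st (to_nat T)) \<in> Sset \<longleftrightarrow> dt_eval T x" if T: "T \<in> set_pmf D" for T
      using Inv_final[OF T Inv_iter[OF T _ Inv_start]] by simp
    then show ?thesis by auto
  qed
  also have "(\<Sum>T\<in>set_pmf D \<inter> {T. dt_eval T x}. pmf D T) = measure_pmf.prob D (set_pmf D \<inter> {T. dt_eval T x})"
    using fin by (simp add: measure_measure_pmf_finite)
  also have "\<dots> = measure_pmf.prob D {T. dt_eval T x}"
    using measure_Int_set_pmf[of D "{T. dt_eval T x}"] by (simp add: Int_commute)
  finally show ?thesis .
qed

end

lemma sim_exists:
  assumes "cl_alg n q D" "0 < n"
  shows "\<exists>m Us S. q_alg n q m Us \<and> (\<forall>x. q_prob1 n m Us S x = measure_pmf.prob D {T. dt_eval T x})"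
proof -
  interpret sim n q D using assms by unfold_locales
  show ?thesis using Us_alg Us_prob by blast
qed

lemma succ_eq:
  assumes "q_prob1 n m Us S x = measure_pmf.prob D {T. dt_eval T x}"
  shows "q_succ n m Us S f x = cl_succ D f x"
proof (cases "f x")
  case True
  then show ?thesis using assms unfolding q_succ_def cl_succ_def by simp
next
  case False
  have "{T. dt_eval T x = f x} = space (measure_pmf D) - {T. dt_eval T x}" using False by auto
  moreover have "measure_pmf.prob D (space (measure_pmf D) - {T. dt_eval T x}) = 1 - measure_pmf.prob D {T. dt_eval T x}"
    by (rule measure_pmf.prob_compl) simp
  ultimately have "cl_succ D f x = 1 - measure_pmf.prob D {T. dt_eval T x}"
    unfolding cl_succ_def by simp
  then show ?thesis using assms False unfolding q_succ_def by simp
qed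


definition vn :: "nat \<Rightarrow> complex Matrix.vec \<Rightarrow> real" where
  "vn d v = L2_set (\<lambda>j. cmod (vec_index v j)) {..<d}"

lemma vn_nonneg: "0 \<le> vn d v" unfolding vn_def by (rule L2_set_nonneg)

lemma vn_sq: "(vn d v)\<^sup>2 = (\<Sum>j<d. (cmod (vec_index v j))\<^sup>2)"
  unfolding vn_def L2_set_def by (simp add: sum_nonneg)

lemma vn_tri3: "vn d (Matrix.vec d (\<lambda>j. vec_index a j - vec_index c j))
   \<le> vn d (Matrix.vec d (\<lambda>j. vec_index a j - vec_index b j)) + vn d (Matrix.vec d (\<lambda>j. vec_index b j - vec_index c j))"
proof -
  have "vn d (Matrix.vec d (\<lambda>j. vec_index a j - vec_index c j)) = L2_set (\<lambda>j. cmod (vec_index a j - vec_index c j)) {..<d}"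
    unfolding vn_def by (rule L2_set_cong) auto
  also have "\<dots> \<le> L2_set (\<lambda>j. cmod (vec_index a j - vec_index b j) + cmod (vec_index b j - vec_index c j)) {..<d}"
  proof (rule L2_set_mono)
    fix j show "cmod (vec_index a j - vec_index c j) \<le> cmod (vec_index a j - vec_index b j) + cmod (vec_index b j - vec_index c j)"
      using norm_triangle_ineq[of "vec_index a j - vec_index b j" "vec_index b j - vec_index c j"] by simp
  qed simp
  also have "\<dots> \<le> L2_set (\<lambda>j. cmod (vec_index a j - vec_index b j)) {..<d} + L2_set (\<lambda>j. cmod (vec_index b j - vec_index c j)) {..<d}"
    by (rule L2_set_triangle_ineq)
  also have "\<dots> = vn d (Matrix.vec d (\<lambda>j. vec_index a j - vec_index b j)) + vn d (Matrix.vec d (\<lambda>j. vec_index b j - vec_index c j))"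
    unfolding vn_def by (intro arg_cong2[where f="(+)"] L2_set_cong) auto
  finally show ?thesis .
qed

definition vdiff :: "nat \<Rightarrow> complex Matrix.vec \<Rightarrow> complex Matrix.vec \<Rightarrow> real" where
  "vdiff d a b = vn d (Matrix.vec d (\<lambda>j. vec_index a j - vec_index b j))"

lemma vdiff_tri: "vdiff d a c \<le> vdiff d a b + vdiff d b c"
  unfolding vdiff_def by (rule vn_tri3)

lemma vdiff_sq: "(vdiff d a b)\<^sup>2 = (\<Sum>j<d. (cmod (vec_index a j - vec_index b j))\<^sup>2)"
  unfolding vdiff_def vn_sq by (rule sum.cong) auto

lemma conj_cnj: "conjugate (z::complex) = cnj z"
  by (simp add: conjugate_complex_def)

lemma unitary_orth:
  assumes U: "is_unitary d U" and k: "k < d" and l: "l < d"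
  shows "(\<Sum>j<d. cnj (U $$ (j,l)) * U $$ (j,k)) = (if l = k then 1 else 0)"
proof -
  have dims: "dim_row U = d" "dim_col U = d" using U unfolding is_unitary_def by auto
  have "(mat_adjoint U * U) $$ (l,k) = 1\<^sub>m d $$ (l,k)" using U unfolding is_unitary_def by simp
  moreover have "(mat_adjoint U * U) $$ (l,k) = Matrix.row (mat_adjoint U) l \<bullet> Matrix.col U k"
    using k l dims by (intro index_mult_mat) auto
  moreover have "Matrix.row (mat_adjoint U) l \<bullet> Matrix.col U k = (\<Sum>j\<in>{0..<d}. vec_index (Matrix.row (mat_adjoint U) l) j * vec_index (Matrix.col U k) j)"
    unfolding scalar_prod_def using dims by simp
  moreover have "\<dots> = (\<Sum>j<d. cnj (U $$ (j,l)) * U $$ (j,k))"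
    using k l dims by (auto simp: mat_adjoint_index conj_cnj atLeast0LessThan intro!: sum.cong)
  ultimately show ?thesis using k l by simp
qed

lemma unitary_apply: "is_unitary d U \<Longrightarrow> dim_vec v = d \<Longrightarrow> j < d \<Longrightarrow>
   vec_index (U *\<^sub>v v) j = (\<Sum>k<d. U $$ (j,k) * vec_index v k)"
  unfolding is_unitary_def by (auto simp: scalar_prod_def atLeast0LessThan)

lemma unitary_norm_sq:
  assumes U: "is_unitary d U" and v: "dim_vec v = d"
  shows "(\<Sum>j<d. (cmod (vec_index (U *\<^sub>v v) j))\<^sup>2) = (\<Sum>j<d. (cmod (vec_index v j))\<^sup>2)"
proof -
  have "complex_of_real (\<Sum>j<d. (cmod (vec_index (U *\<^sub>v v) j))\<^sup>2)
      = (\<Sum>j<d. (\<Sum>k<d. U $$ (j,k) * vec_index v k) * cnj (\<Sum>l<d. U $$ (j,l) * vec_index v l))"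
    by (simp only: of_real_sum complex_norm_square) (rule sum.cong[OF refl], simp add: unitary_apply[OF U v])
  also have "\<dots> = (\<Sum>j<d. \<Sum>k<d. \<Sum>l<d. (vec_index v k * cnj (vec_index v l)) * (cnj (U $$ (j,l)) * U $$ (j,k)))"
    by (intro sum.cong refl) (simp only: cnj_sum sum_product complex_cnj_mult, intro sum.cong refl, simp add: algebra_simps)
  also have "\<dots> = (\<Sum>k<d. \<Sum>l<d. \<Sum>j<d. (vec_index v k * cnj (vec_index v l)) * (cnj (U $$ (j,l)) * U $$ (j,k)))"
    by (subst sum.swap) (rule sum.cong[OF refl], rule sum.swap)
  also have "\<dots> = (\<Sum>k<d. \<Sum>l<d. (vec_index v k * cnj (vec_index v l)) * (if l = k then 1 else 0))"
    by (intro sum.cong refl) (simp add: sum_distrib_left[symmetric] unitary_orth[OF U])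
  also have "\<dots> = (\<Sum>k<d. vec_index v k * cnj (vec_index v k))"
    by (simp add: if_distrib cong: if_cong)
  also have "\<dots> = complex_of_real (\<Sum>j<d. (cmod (vec_index v j))\<^sup>2)"
    by (simp only: of_real_sum complex_norm_square)
  finally show ?thesis by (simp only: of_real_eq_iff)
qed

lemma unitary_vn: "is_unitary d U \<Longrightarrow> dim_vec v = d \<Longrightarrow> vn d (U *\<^sub>v v) = vn d v"
  unfolding vn_def L2_set_def using unitary_norm_sq by simp


lemma vn_cong: "(\<And>j. j < d \<Longrightarrow> vec_index v j = vec_index w j) \<Longrightarrow> vn d v = vn d w"
  unfolding vn_def by (rule L2_set_cong) auto

lemma unitary_dim: "is_unitary d U \<Longrightarrow> dim_vec (U *\<^sub>v v) = d"
  unfolding is_unitary_def by auto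

lemma unitary_vdiff:
  assumes U: "is_unitary d U" and a: "dim_vec a = d" and b: "dim_vec b = d"
  shows "vdiff d (U *\<^sub>v a) (U *\<^sub>v b) = vdiff d a b"
proof -
  let ?c = "Matrix.vec d (\<lambda>j. vec_index a j - vec_index b j)"
  have c: "dim_vec ?c = d" by simp
  have "vdiff d (U *\<^sub>v a) (U *\<^sub>v b) = vn d (U *\<^sub>v ?c)"
    unfolding vdiff_def
  proof (rule vn_cong)
    fix j assume j: "j < d"
    have "vec_index (U *\<^sub>v a) j - vec_index (U *\<^sub>v b) j = (\<Sum>k<d. U $$ (j,k) * (vec_index a k - vec_index b k))"
      using j by (simp add: unitary_apply[OF U a] unitary_apply[OF U b] sum_subtractf algebra_simps)
    also have "\<dots> = vec_index (U *\<^sub>v ?c) j"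
      using j by (simp add: unitary_apply[OF U c])
    finally show "vec_index (Matrix.vec d (\<lambda>j. vec_index (U *\<^sub>v a) j - vec_index (U *\<^sub>v b) j)) j = vec_index (U *\<^sub>v ?c) j"
      using j by simp
  qed
  also have "\<dots> = vn d ?c" by (rule unitary_vn[OF U c])
  finally show ?thesis unfolding vdiff_def .
qed

lemma qtail_dim: "is_unitary d Ox \<Longrightarrow> \<forall>U\<in>set Us. is_unitary d U \<Longrightarrow> dim_vec w = d \<Longrightarrow> dim_vec (qtail Ox Us w) = d"
proof (induction Us arbitrary: w)
  case (Cons U Us)
  then have "dim_vec (U *\<^sub>v (Ox *\<^sub>v w)) = d" by (auto simp: is_unitary_def)
  with Cons show ?case by simp
qed simp

lemma qtail_vn: "is_unitary d Ox \<Longrightarrow> \<forall>U\<in>set Us. is_unitary d U \<Longrightarrow> dim_vec w = d \<Longrightarrow> vn d (qtail Ox Us w) = vn d w"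
proof (induction Us arbitrary: w)
  case (Cons U Us)
  then have U: "is_unitary d U" by simp
  have d1: "dim_vec (Ox *\<^sub>v w) = d" using Cons.prems(1) by (auto simp: is_unitary_def)
  have "dim_vec (U *\<^sub>v (Ox *\<^sub>v w)) = d" using U by (auto simp: is_unitary_def)
  then have "vn d (qtail Ox (U # Us) w) = vn d (U *\<^sub>v (Ox *\<^sub>v w))" using Cons by simp
  also have "\<dots> = vn d (Ox *\<^sub>v w)" by (rule unitary_vn[OF U d1])
  also have "\<dots> = vn d w" by (rule unitary_vn[OF Cons.prems(1) Cons.prems(3)])
  finally show ?case .
qed simp

lemma qtail_vdiff: "is_unitary d Ox \<Longrightarrow> \<forall>U\<in>set Us. is_unitary d U \<Longrightarrow> dim_vec a = d \<Longrightarrow> dim_vec b = d \<Longrightarrow>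
    vdiff d (qtail Ox Us a) (qtail Ox Us b) = vdiff d a b"
proof (induction Us arbitrary: a b)
  case (Cons U Us)
  then have U: "is_unitary d U" by simp
  have da: "dim_vec (Ox *\<^sub>v a) = d" "dim_vec (Ox *\<^sub>v b) = d" using Cons.prems(1) by (auto simp: is_unitary_def)
  have "dim_vec (U *\<^sub>v (Ox *\<^sub>v a)) = d" "dim_vec (U *\<^sub>v (Ox *\<^sub>v b)) = d" using U by (auto simp: is_unitary_def)
  then have "vdiff d (qtail Ox (U # Us) a) (qtail Ox (U # Us) b) = vdiff d (U *\<^sub>v (Ox *\<^sub>v a)) (U *\<^sub>v (Ox *\<^sub>v b))"
    using Cons by simp
  also have "\<dots> = vdiff d (Ox *\<^sub>v a) (Ox *\<^sub>v b)" by (rule unitary_vdiff[OF U da])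
  also have "\<dots> = vdiff d a b" by (rule unitary_vdiff[OF Cons.prems(1) Cons.prems(3,4)])
  finally show ?case .
qed simp

fun hyb :: "nat \<Rightarrow> complex mat \<Rightarrow> complex mat \<Rightarrow> complex mat list \<Rightarrow> complex Matrix.vec \<Rightarrow> real" where
  "hyb d O1 O2 [] w = 0"
| "hyb d O1 O2 (U # Us) w = vdiff d (O1 *\<^sub>v w) (O2 *\<^sub>v w) + hyb d O1 O2 Us (U *\<^sub>v (O1 *\<^sub>v w))"

lemma vdiff_self: "vdiff d a a = 0"
  unfolding vdiff_def vn_def by (simp add: L2_set_def)

lemma hyb_bound:
  assumes O1: "is_unitary d O1" and O2: "is_unitary d O2"
  shows "\<forall>U\<in>set Us. is_unitary d U \<Longrightarrow> dim_vec w = d \<Longrightarrow> vdiff d (qtail O1 Us w) (qtail O2 Us w) \<le> hyb d O1 O2 Us w"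
proof (induction Us arbitrary: w)
  case Nil
  then show ?case by (simp add: vdiff_self)
next
  case (Cons U Us)
  have U: "is_unitary d U" and Us: "\<forall>U\<in>set Us. is_unitary d U" using Cons.prems by auto
  let ?a = "U *\<^sub>v (O1 *\<^sub>v w)" and ?b = "U *\<^sub>v (O2 *\<^sub>v w)"
  have da: "dim_vec ?a = d" and db: "dim_vec ?b = d" using U by (auto simp: is_unitary_def)
  have d1: "dim_vec (O1 *\<^sub>v w) = d" and d2: "dim_vec (O2 *\<^sub>v w) = d" using O1 O2 by (auto simp: is_unitary_def)
  have "vdiff d (qtail O1 (U # Us) w) (qtail O2 (U # Us) w) = vdiff d (qtail O1 Us ?a) (qtail O2 Us ?b)" by simp
  also have "\<dots> \<le> vdiff d (qtail O1 Us ?a) (qtail O2 Us ?a) + vdiff d (qtail O2 Us ?a) (qtail O2 Us ?b)"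
    by (rule vdiff_tri)
  also have "vdiff d (qtail O2 Us ?a) (qtail O2 Us ?b) = vdiff d ?a ?b"
    by (rule qtail_vdiff[OF O2 Us da db])
  also have "\<dots> = vdiff d (O1 *\<^sub>v w) (O2 *\<^sub>v w)" by (rule unitary_vdiff[OF U d1 d2])
  also have "vdiff d (qtail O1 Us ?a) (qtail O2 Us ?a) \<le> hyb d O1 O2 Us ?a" by (rule Cons.IH[OF Us da])
  finally show ?case by simp
qed

lemma qop_invol:
  assumes m: "0 < m" and e: "e < n * (2 * m)"
  shows "qop_perm m x (qop_perm m x e) = e"
proof -
  let ?i = "e div (2 * m)" and ?b = "e mod (2 * m) div m" and ?z = "e mod m"
  have ed: "e = enc m ?i ?b ?z" by (rule enc_decomp[OF m])
  have b: "?b < 2" by (rule dec_b_lt[OF m])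
  have z: "?z < m" using m by simp
  let ?b' = "if x ! ?i then 1 - ?b else ?b"
  have b': "?b' < 2" using b by auto
  have q1: "qop_perm m x e = enc m ?i ?b' ?z" by (subst ed, rule qop_enc[OF b z])
  have q2: "qop_perm m x (enc m ?i ?b' ?z) = enc m ?i (if x ! ?i then 1 - ?b' else ?b') ?z"
    by (rule qop_enc[OF b' z])
  have "(if x ! ?i then 1 - ?b' else ?b') = ?b" using b by auto
  then show ?thesis using q1 q2 ed by simp
qed

lemma ox_apply:
  assumes m: "0 < m" and e: "e < n * (2 * m)" and w: "dim_vec w = n * (2 * m)"
  shows "vec_index (pmat (n * (2 * m)) (qop_perm m x) *\<^sub>v w) e = vec_index w (qop_perm m x e)"
proof -
  have pb: "pbij (n * (2 * m)) (qop_perm m x)" by (rule pbij_qop[OF m])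
  have qe: "qop_perm m x e < n * (2 * m)" using pb e unfolding pbij_def by auto
  have "vec_index (pmat (n * (2 * m)) (qop_perm m x) *\<^sub>v w) (qop_perm m x (qop_perm m x e)) = vec_index w (qop_perm m x e)"
    by (rule pmat_apply_img[OF pb w qe])
  then show ?thesis using qop_invol[OF m e] by simp
qed

lemma sum_enc:
  assumes m: "0 < m"
  shows "(\<Sum>e<n * (2 * m). F e) = (\<Sum>i<n. \<Sum>z<m. F (enc m i 0 z) + F (enc m i 1 z))"
proof -
  let ?g = "\<lambda>(i, b, z). enc m i b z"
  let ?A = "{..<n} \<times> {..<2::nat} \<times> {..<m}"
  have inj: "inj_on ?g ?A"
  proof (rule inj_onI)
    fix p1 p2 assume "p1 \<in> ?A" "p2 \<in> ?A" "?g p1 = ?g p2"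
    then show "p1 = p2" using enc_div enc_b enc_z by (auto simp: split: prod.splits) metis+
  qed
  have img: "?g ` ?A = {..<n * (2 * m)}"
  proof
    show "?g ` ?A \<subseteq> {..<n * (2 * m)}" by (auto intro: enc_lt)
    show "{..<n * (2 * m)} \<subseteq> ?g ` ?A"
    proof
      fix e assume "e \<in> {..<n * (2 * m)}"
      then have e: "e < n * (2 * m)" by simp
      have "e = ?g (e div (2 * m), e mod (2 * m) div m, e mod m)" using enc_decomp[OF m] by simp
      moreover have "(e div (2 * m), e mod (2 * m) div m, e mod m) \<in> ?A"
        using dec_i_lt[OF e] dec_b_lt[OF m] m by auto
      ultimately show "e \<in> ?g ` ?A" by blast
    qed
  qed
  have "(\<Sum>e<n * (2 * m). F e) = (\<Sum>p\<in>?A. F (?g p))"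
    unfolding img[symmetric] using sum.reindex[OF inj, of F] by (simp add: comp_def)
  also have "\<dots> = (\<Sum>i<n. \<Sum>bz\<in>{..<2::nat} \<times> {..<m}. F (enc m i (fst bz) (snd bz)))"
    unfolding sum.cartesian_product by (simp add: case_prod_beta)
  also have "\<dots> = (\<Sum>i<n. \<Sum>b<2. \<Sum>z<m. F (enc m i b z))"
    unfolding sum.cartesian_product by (simp add: case_prod_beta)
  also have "\<dots> = (\<Sum>i<n. \<Sum>z<m. F (enc m i 0 z) + F (enc m i 1 z))"
    by (simp add: numeral_2_eq_2 sum.distrib)
  finally show ?thesis .
qed


definition Bk :: "nat \<Rightarrow> complex Matrix.vec \<Rightarrow> nat \<Rightarrow> real" where
  "Bk m w i = (\<Sum>z<m. (cmod (vec_index w (enc m i 0 z)))\<^sup>2 + (cmod (vec_index w (enc m i 1 z)))\<^sup>2)"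

lemma Bk_nonneg: "0 \<le> Bk m w i" unfolding Bk_def by (intro sum_nonneg) simp

lemma Bk_sum: "0 < m \<Longrightarrow> (\<Sum>i<n. Bk m w i) = (vn (n * (2 * m)) w)\<^sup>2"
  unfolding vn_sq Bk_def by (rule sum_enc[symmetric])

lemma sq_diff_le: "(cmod (a - b))\<^sup>2 \<le> 2 * (cmod a)\<^sup>2 + 2 * (cmod b)\<^sup>2"
proof -
  have "cmod (a - b) \<le> cmod a + cmod b" by (rule norm_triangle_ineq4)
  then have "(cmod (a - b))\<^sup>2 \<le> (cmod a + cmod b)\<^sup>2" by (intro power_mono) auto
  also have "\<dots> \<le> 2 * (cmod a)\<^sup>2 + 2 * (cmod b)\<^sup>2"
    using sum_squares_bound[of "cmod a" "cmod b"] by (simp add: power2_eq_square algebra_simps)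
  finally show ?thesis .
qed

lemma block_bound:
  assumes m: "0 < m" and i: "i < n" and w: "dim_vec w = n * (2 * m)"
    and xy: "\<And>j. j < n \<Longrightarrow> j \<noteq> i \<Longrightarrow> x ! j = y ! j"
  shows "vdiff (n * (2 * m)) (pmat (n * (2 * m)) (qop_perm m x) *\<^sub>v w) (pmat (n * (2 * m)) (qop_perm m y) *\<^sub>v w)
         \<le> sqrt 8 * sqrt (Bk m w i)"
proof -
  let ?d = "n * (2 * m)"
  let ?F = "\<lambda>e. (cmod (vec_index w (qop_perm m x e) - vec_index w (qop_perm m y e)))\<^sup>2"
  have "(vdiff ?d (pmat ?d (qop_perm m x) *\<^sub>v w) (pmat ?d (qop_perm m y) *\<^sub>v w))\<^sup>2 = (\<Sum>e<?d. ?F e)"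
    unfolding vdiff_sq
  proof (rule sum.cong[OF refl])
    fix e assume "e \<in> {..<?d}"
    then have e: "e < ?d" by simp
    show "(cmod (vec_index (pmat ?d (qop_perm m x) *\<^sub>v w) e - vec_index (pmat ?d (qop_perm m y) *\<^sub>v w) e))\<^sup>2 = ?F e"
      by (simp only: ox_apply[OF m e w])
  qed
  also have "\<dots> = (\<Sum>i'<n. \<Sum>z<m. ?F (enc m i' 0 z) + ?F (enc m i' 1 z))" by (rule sum_enc[OF m])
  also have "\<dots> = (\<Sum>i'<n. if i' = i then (\<Sum>z<m. ?F (enc m i 0 z) + ?F (enc m i 1 z)) else 0)"
  proof (rule sum.cong[OF refl])
    fix i' assume "i' \<in> {..<n}"
    then have i': "i' < n" by simp
    show "(\<Sum>z<m. ?F (enc m i' 0 z) + ?F (enc m i' 1 z)) = (if i' = i then (\<Sum>z<m. ?F (enc m i 0 z) + ?F (enc m i 1 z)) else 0)"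
    proof (cases "i' = i")
      case False
      have "?F (enc m i' b z) = 0" if "b < 2" "z < m" for b z
        using qop_enc[OF that, of x i'] qop_enc[OF that, of y i'] xy[OF i' False] by simp
      then show ?thesis using False by simp
    qed simp
  qed
  also have "\<dots> = (\<Sum>z<m. ?F (enc m i 0 z) + ?F (enc m i 1 z))" using i by simp
  also have "\<dots> \<le> (\<Sum>z<m. 8 * ((cmod (vec_index w (enc m i 0 z)))\<^sup>2 + (cmod (vec_index w (enc m i 1 z)))\<^sup>2))"
  proof (rule sum_mono)
    fix z assume "z \<in> {..<m}"
    then have z: "z < m" by simp
    let ?s = "(cmod (vec_index w (enc m i 0 z)))\<^sup>2 + (cmod (vec_index w (enc m i 1 z)))\<^sup>2"
    have one: "(cmod (vec_index w (enc m i b z)))\<^sup>2 \<le> ?s" if "b < 2" for b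
      using that by (cases b) auto
    have F: "?F (enc m i b z) \<le> 4 * ?s" if "b < 2" for b
    proof -
      let ?b1 = "if x ! i then 1 - b else b" and ?b2 = "if y ! i then 1 - b else b"
      have "?F (enc m i b z) = (cmod (vec_index w (enc m i ?b1 z) - vec_index w (enc m i ?b2 z)))\<^sup>2"
        using qop_enc[OF that z, of x i] qop_enc[OF that z, of y i] by simp
      also have "\<dots> \<le> 2 * (cmod (vec_index w (enc m i ?b1 z)))\<^sup>2 + 2 * (cmod (vec_index w (enc m i ?b2 z)))\<^sup>2"
        by (rule sq_diff_le)
      also have "\<dots> \<le> 2 * ?s + 2 * ?s"
      proof -
        have b1: "?b1 < 2" and b2: "?b2 < 2" using that by auto
        have o1: "(cmod (vec_index w (enc m i ?b1 z)))\<^sup>2 \<le> ?s" by (rule one[OF b1])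
        have o2: "(cmod (vec_index w (enc m i ?b2 z)))\<^sup>2 \<le> ?s" by (rule one[OF b2])
        show ?thesis by (intro add_mono mult_left_mono o1 o2) simp_all
      qed
      finally show ?thesis by simp
    qed
    show "?F (enc m i 0 z) + ?F (enc m i 1 z) \<le> 8 * ?s" using F[of 0] F[of 1] by simp
  qed
  also have "\<dots> = 8 * Bk m w i" unfolding Bk_def by (simp add: sum_distrib_left)
  finally have sq: "(vdiff ?d (pmat ?d (qop_perm m x) *\<^sub>v w) (pmat ?d (qop_perm m y) *\<^sub>v w))\<^sup>2 \<le> 8 * Bk m w i" .
  have "vdiff ?d (pmat ?d (qop_perm m x) *\<^sub>v w) (pmat ?d (qop_perm m y) *\<^sub>v w) \<le> sqrt (8 * Bk m w i)"
    using sq by (intro real_le_rsqrt) 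
  then show ?thesis by (simp add: real_sqrt_mult)
qed

lemma cs_sqrt:
  assumes "finite I" "\<And>i. i \<in> I \<Longrightarrow> 0 \<le> a i"
  shows "(\<Sum>i\<in>I. sqrt (a i)) \<le> sqrt (real (card I)) * sqrt (\<Sum>i\<in>I. a i)"
proof -
  have "(\<Sum>i\<in>I. sqrt (a i))\<^sup>2 \<le> (\<Sum>i\<in>I. (sqrt (a i))\<^sup>2) * real (card I)"
    by (rule sum_squared_le_sum_of_squares)
  also have "(\<Sum>i\<in>I. (sqrt (a i))\<^sup>2) = (\<Sum>i\<in>I. a i)" using assms(2) by (intro sum.cong) auto
  finally have "(\<Sum>i\<in>I. sqrt (a i)) \<le> sqrt ((\<Sum>i\<in>I. a i) * real (card I))" by (rule real_le_rsqrt)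
  then show ?thesis by (simp add: real_sqrt_mult mult.commute)
qed

lemma hyb_sum:
  assumes m: "0 < m" and I: "I \<subseteq> {..<n}"
    and xy: "\<And>i j. i \<in> I \<Longrightarrow> j < n \<Longrightarrow> j \<noteq> i \<Longrightarrow> x ! j = y i ! j"
  shows "\<forall>U\<in>set Us. is_unitary (n * (2 * m)) U \<Longrightarrow> dim_vec w = n * (2 * m) \<Longrightarrow>
    (\<Sum>i\<in>I. hyb (n * (2 * m)) (pmat (n * (2 * m)) (qop_perm m x)) (pmat (n * (2 * m)) (qop_perm m (y i))) Us w)
     \<le> sqrt 8 * real (length Us) * sqrt (real (card I)) * vn (n * (2 * m)) w"
proof (induction Us arbitrary: w)
  case Nil
  then show ?case by simp
next
  case (Cons U Us)
  let ?d = "n * (2 * m)"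
  let ?Ox = "pmat ?d (qop_perm m x)"
  have U: "is_unitary ?d U" and Us: "\<forall>U\<in>set Us. is_unitary ?d U" using Cons.prems by auto
  have Oxu: "is_unitary ?d ?Ox" by (rule pmat_unitary[OF pbij_qop[OF m]])
  have w: "dim_vec w = ?d" by (rule Cons.prems(2))
  let ?w' = "U *\<^sub>v (?Ox *\<^sub>v w)"
  have d1: "dim_vec (?Ox *\<^sub>v w) = ?d" by simp
  have dw': "dim_vec ?w' = ?d" using U by (auto simp: is_unitary_def)
  have vw': "vn ?d ?w' = vn ?d w" using unitary_vn[OF U d1] unitary_vn[OF Oxu w] by simp
  have fI: "finite I" using I finite_subset by blast
  have "(\<Sum>i\<in>I. vdiff ?d (?Ox *\<^sub>v w) (pmat ?d (qop_perm m (y i)) *\<^sub>v w)) \<le> (\<Sum>i\<in>I. sqrt 8 * sqrt (Bk m w i))"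
  proof (rule sum_mono)
    fix i assume i: "i \<in> I"
    show "vdiff ?d (?Ox *\<^sub>v w) (pmat ?d (qop_perm m (y i)) *\<^sub>v w) \<le> sqrt 8 * sqrt (Bk m w i)"
      by (rule block_bound[OF m _ w]) (use i I xy in auto)
  qed
  also have "\<dots> = sqrt 8 * (\<Sum>i\<in>I. sqrt (Bk m w i))" by (simp add: sum_distrib_left)
  also have "\<dots> \<le> sqrt 8 * (sqrt (real (card I)) * sqrt (\<Sum>i\<in>I. Bk m w i))"
    by (intro mult_left_mono cs_sqrt[OF fI] Bk_nonneg) auto
  also have "(\<Sum>i\<in>I. Bk m w i) \<le> (\<Sum>i<n. Bk m w i)"
    by (rule sum_mono2) (use I Bk_nonneg in auto)
  then have "sqrt (\<Sum>i\<in>I. Bk m w i) \<le> vn ?d w"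
    using Bk_sum[OF m, where n=n and w=w] vn_nonneg[of ?d w] by (metis real_sqrt_le_mono real_sqrt_abs abs_of_nonneg)
  then have "sqrt 8 * (sqrt (real (card I)) * sqrt (\<Sum>i\<in>I. Bk m w i)) \<le> sqrt 8 * (sqrt (real (card I)) * vn ?d w)"
    by (intro mult_left_mono) auto
  finally have A: "(\<Sum>i\<in>I. vdiff ?d (?Ox *\<^sub>v w) (pmat ?d (qop_perm m (y i)) *\<^sub>v w)) \<le> sqrt 8 * sqrt (real (card I)) * vn ?d w"
    by (simp add: mult.assoc)
  have B: "(\<Sum>i\<in>I. hyb ?d ?Ox (pmat ?d (qop_perm m (y i))) Us ?w') \<le> sqrt 8 * real (length Us) * sqrt (real (card I)) * vn ?d w"
    using Cons.IH[OF Us dw'] vw' by simp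
  have "(\<Sum>i\<in>I. hyb ?d ?Ox (pmat ?d (qop_perm m (y i))) (U # Us) w)
      = (\<Sum>i\<in>I. vdiff ?d (?Ox *\<^sub>v w) (pmat ?d (qop_perm m (y i)) *\<^sub>v w)) + (\<Sum>i\<in>I. hyb ?d ?Ox (pmat ?d (qop_perm m (y i))) Us ?w')"
    by (simp add: sum.distrib)
  also have "\<dots> \<le> sqrt 8 * sqrt (real (card I)) * vn ?d w + sqrt 8 * real (length Us) * sqrt (real (card I)) * vn ?d w"
    using A B by linarith
  also have "\<dots> = sqrt 8 * real (length (U # Us)) * sqrt (real (card I)) * vn ?d w"
    by (simp add: algebra_simps)
  finally show ?case .
qed

lemma prob_diff:
  assumes a: "dim_vec a = d" and b: "dim_vec b = d"
  shows "\<bar>(\<Sum>j\<in>S \<inter> {..<d}. (cmod (vec_index a j))\<^sup>2) - (\<Sum>j\<in>S \<inter> {..<d}. (cmod (vec_index b j))\<^sup>2)\<bar>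
         \<le> vdiff d a b * (vn d a + vn d b)"
proof -
  let ?A = "\<lambda>j. cmod (vec_index a j)" and ?B = "\<lambda>j. cmod (vec_index b j)"
  have "\<bar>(\<Sum>j\<in>S \<inter> {..<d}. (?A j)\<^sup>2) - (\<Sum>j\<in>S \<inter> {..<d}. (?B j)\<^sup>2)\<bar> = \<bar>\<Sum>j\<in>S \<inter> {..<d}. (?A j)\<^sup>2 - (?B j)\<^sup>2\<bar>"
    by (simp add: sum_subtractf)
  also have "\<dots> \<le> (\<Sum>j\<in>S \<inter> {..<d}. \<bar>(?A j)\<^sup>2 - (?B j)\<^sup>2\<bar>)" by (rule sum_abs)
  also have "\<dots> \<le> (\<Sum>j<d. \<bar>(?A j)\<^sup>2 - (?B j)\<^sup>2\<bar>)" by (rule sum_mono2) auto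
  also have "\<dots> \<le> (\<Sum>j<d. \<bar>cmod (vec_index a j - vec_index b j)\<bar> * \<bar>?A j + ?B j\<bar>)"
  proof (rule sum_mono)
    fix j
    have "\<bar>(?A j)\<^sup>2 - (?B j)\<^sup>2\<bar> = \<bar>?A j - ?B j\<bar> * \<bar>?A j + ?B j\<bar>"
    proof -
      have "(?A j)\<^sup>2 - (?B j)\<^sup>2 = (?A j - ?B j) * (?A j + ?B j)" by (simp add: power2_eq_square algebra_simps)
      then show ?thesis by (simp only: abs_mult)
    qed
    also have "\<dots> \<le> \<bar>cmod (vec_index a j - vec_index b j)\<bar> * \<bar>?A j + ?B j\<bar>"
      by (intro mult_right_mono) (auto simp: norm_triangle_ineq3)
    finally show "\<bar>(?A j)\<^sup>2 - (?B j)\<^sup>2\<bar> \<le> \<bar>cmod (vec_index a j - vec_index b j)\<bar> * \<bar>?A j + ?B j\<bar>" .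
  qed
  also have "\<dots> \<le> L2_set (\<lambda>j. cmod (vec_index a j - vec_index b j)) {..<d} * L2_set (\<lambda>j. ?A j + ?B j) {..<d}"
    by (rule L2_set_mult_ineq)
  also have "L2_set (\<lambda>j. cmod (vec_index a j - vec_index b j)) {..<d} = vdiff d a b"
    unfolding vdiff_def vn_def by (rule L2_set_cong) auto
  also have "L2_set (\<lambda>j. ?A j + ?B j) {..<d} \<le> vn d a + vn d b"
    unfolding vn_def by (rule L2_set_triangle_ineq)
  finally show ?thesis
    by (rule order_trans) (intro mult_left_mono, simp_all add: vdiff_def vn_nonneg)
qed



lemma finite_inputs: "finite (inputs n)"
proof -
  have "inputs n = {xs. set xs \<subseteq> (UNIV::bool set) \<and> length xs = n}" unfolding inputs_def by auto
  then show ?thesis using finite_lists_length_eq[of "UNIV::bool set" n] by simp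
qed

lemma count_card: "count_list x True = card {j. j < length x \<and> x ! j}"
  by (simp add: count_list_eq_length_filter length_filter_conv_card)

lemma count_repl: "count_list (replicate n b) True = (if b then n else 0)"
  by (induction n) auto

definition Lk :: "nat \<Rightarrow> nat \<Rightarrow> nat" where
  "Lk n k = (if 2 * k + 1 \<le> n then 2 * n - 2 * k - 1 else 2 * k + 1)"

definition tk :: "nat \<Rightarrow> nat \<Rightarrow> nat \<Rightarrow> dtree" where
  "tk n k j = (if j < n then Query j (Leaf False) (Leaf True) else Leaf (2 * k + 1 \<le> n))"

definition D1 :: "nat \<Rightarrow> nat \<Rightarrow> dtree pmf" where
  "D1 n k = map_pmf (tk n k) (pmf_of_set {..<Lk n k})"

lemma Lk_bounds: "0 < n \<Longrightarrow> k \<le> n - 1 \<Longrightarrow> n \<le> Lk n k \<and> Lk n k \<le> 2 * n"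
  unfolding Lk_def by auto

lemma D1_alg: assumes "0 < n" "k \<le> n - 1" shows "cl_alg n 1 (D1 n k)"
proof -
  have "0 < Lk n k" using Lk_bounds[OF assms] assms by linarith
  then have L: "{..<Lk n k} \<noteq> {}" by (metis lessThan_iff emptyE)
  show ?thesis unfolding cl_alg_def D1_def using L by (auto simp: set_pmf_of_set tk_def)
qed

lemma D1_prob:
  assumes n: "0 < n" and k: "k \<le> n - 1" and x: "length x = n"
  shows "measure_pmf.prob (D1 n k) {T. dt_eval T x}
         = real (count_list x True + (if 2 * k + 1 \<le> n then Lk n k - n else 0)) / real (Lk n k)"
proof -
  let ?L = "Lk n k"
  have Lb: "n \<le> ?L" using Lk_bounds[OF n k] by simp
  have "0 < ?L" using Lb n by linarith
  then have L: "{..<?L} \<noteq> {}" by (metis lessThan_iff emptyE)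
  have "measure_pmf.prob (D1 n k) {T. dt_eval T x} = measure_pmf.prob (pmf_of_set {..<?L}) (tk n k -` {T. dt_eval T x})"
    unfolding D1_def by (rule measure_map_pmf)
  also have "\<dots> = real (card ({..<?L} \<inter> (tk n k -` {T. dt_eval T x}))) / real (card {..<?L})"
    using L by (simp add: measure_pmf_of_set)
  also have "{..<?L} \<inter> (tk n k -` {T. dt_eval T x}) = {j. j < n \<and> x ! j} \<union> (if 2 * k + 1 \<le> n then {n..<?L} else {})"
    using Lb by (auto simp: tk_def)
  also have "card \<dots> = count_list x True + (if 2 * k + 1 \<le> n then ?L - n else 0)"
  proof -
    have c1: "card {j. j < n \<and> x ! j} = count_list x True" using x by (simp add: count_card)
    have disj: "{j. j < n \<and> x ! j} \<inter> {n..<?L} = {}" by auto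
    show ?thesis
      using c1 card_Un_disjoint[OF _ _ disj] by auto
  qed
  finally show ?thesis by simp
qed

lemma D1_succ:
  assumes n: "0 < n" and k: "k \<le> n - 1" and x: "length x = n"
  shows "cl_succ (D1 n k) (TH k) x \<ge> 1/2 + 1 / (2 * real (Lk n k))"
proof -
  let ?L = "Lk n k" and ?w = "count_list x True"
  have Lb: "n \<le> ?L" "?L \<le> 2 * n" using Lk_bounds[OF n k] by auto
  have Lpos: "0 < real ?L" using Lb n by simp
  have wn: "?w \<le> n" using x count_le_length[of x True] by simp
  define P where "P = measure_pmf.prob (D1 n k) {T. dt_eval T x}"
  have P: "P = real (?w + (if 2 * k + 1 \<le> n then ?L - n else 0)) / real ?L"
    unfolding P_def by (rule D1_prob[OF n k x])
  have succ: "cl_succ (D1 n k) (TH k) x = (if TH k x then P else 1 - P)"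
  proof (cases "TH k x")
    case True
    then show ?thesis unfolding cl_succ_def P_def by simp
  next
    case False
    have "{T. dt_eval T x = TH k x} = space (measure_pmf (D1 n k)) - {T. dt_eval T x}" using False by auto
    moreover have "measure_pmf.prob (D1 n k) (space (measure_pmf (D1 n k)) - {T. dt_eval T x}) = 1 - P"
      unfolding P_def by (rule measure_pmf.prob_compl) simp
    ultimately show ?thesis using False unfolding cl_succ_def by simp
  qed
  show ?thesis
  proof (cases "2 * k + 1 \<le> n")
    case True
    then have L: "?L = 2 * n - 2 * k - 1" unfolding Lk_def by simp
    have LL: "real ?L = 2 * real n - 2 * real k - 1" using True L by linarith
    have Pe: "P = (real ?w + real n - 2 * real k - 1) / real ?L" using P True L Lb by (simp add: of_nat_diff)
    have nk: "real n - real k = (real ?L + 1) / 2" using LL by simp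
    have half: "1/2 + 1 / (2 * real ?L) = (real n - real k) / real ?L" unfolding nk using Lpos by (simp add: field_simps)
    show ?thesis
    proof (cases "TH k x")
      case T: True
      then have "real k + 1 \<le> real ?w" unfolding TH_def by simp
      then have "(real n - real k) / real ?L \<le> P" unfolding Pe using Lpos by (intro divide_right_mono) auto
      then show ?thesis using succ T half by simp
    next
      case F: False
      then have "real ?w \<le> real k" unfolding TH_def by simp
      moreover have "1 - P = (real n - real ?w) / real ?L"
      proof -
        have "1 - P = (real ?L - (real ?w + real n - 2 * real k - 1)) / real ?L" unfolding Pe using Lpos by (simp add: field_simps)
        also have "real ?L - (real ?w + real n - 2 * real k - 1) = real n - real ?w" using LL by simp
        finally show ?thesis .
      qed
      ultimately have "(real n - real k) / real ?L \<le> 1 - P" using Lpos by (simp add: divide_right_mono)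
      then show ?thesis using succ F half by simp
    qed
  next
    case False
    then have L: "?L = 2 * k + 1" unfolding Lk_def by simp
    have Pe: "P = real ?w / (2 * real k + 1)" using P False L by simp
    have Lr: "real ?L = 2 * real k + 1" using L by simp
    have half: "1/2 + 1 / (2 * real ?L) = (real k + 1) / (2 * real k + 1)" unfolding Lr by (simp add: field_simps)
    show ?thesis
    proof (cases "TH k x")
      case T: True
      then have "real k + 1 \<le> real ?w" unfolding TH_def by simp
      then have "(real k + 1) / (2 * real k + 1) \<le> P" unfolding Pe by (intro divide_right_mono) auto
      then show ?thesis using succ T half by simp
    next
      case F: False
      then have "real ?w \<le> real k" unfolding TH_def by simp
      moreover have "1 - P = (2 * real k + 1 - real ?w) / (2 * real k + 1)" unfolding Pe by (simp add: field_simps)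
      ultimately have "(real k + 1) / (2 * real k + 1) \<le> 1 - P" by (simp add: divide_right_mono)
      then show ?thesis using succ F half by simp
    qed
  qed
qed

lemma D1_min:
  assumes n: "0 < n" and k: "k \<le> n - 1"
  shows "cl_min_succ n (TH k) (D1 n k) \<ge> 1/2 + 1 / (2 * real (Lk n k))"
proof -
  have ne: "inputs n \<noteq> {}" unfolding inputs_def by (auto intro: exI[of _ "replicate n False"])
  show ?thesis unfolding cl_min_succ_def
    using finite_inputs ne D1_succ[OF n k] by (auto simp: inputs_def)
qed

lemma x0x1:
  assumes n: "0 < n" and k: "k \<le> n - 1"
  shows "replicate n False \<in> inputs n" "replicate n True \<in> inputs n"
    "\<not> TH k (replicate n False)" "TH k (replicate n True)"
  using n k by (auto simp: inputs_def TH_def count_repl)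

lemma cl_zero:
  assumes n: "0 < n" and k: "k \<le> n - 1" and alg: "cl_alg n 0 D"
  shows "\<not> (\<forall>x\<in>inputs n. cl_succ D (TH k) x > 1/2)"
proof
  assume all: "\<forall>x\<in>inputs n. cl_succ D (TH k) x > 1/2"
  let ?x0 = "replicate n False" and ?x1 = "replicate n True"
  have leaf: "dt_eval T ?x0 = dt_eval T ?x1" if "T \<in> set_pmf D" for T
  proof -
    have "dt_depth T = 0" using alg that unfolding cl_alg_def by auto
    then show ?thesis by (cases T) auto
  qed
  let ?A = "{T. dt_eval T ?x0}"
  have s0: "cl_succ D (TH k) ?x0 = 1 - measure_pmf.prob D ?A"
  proof -
    have "{T. dt_eval T ?x0 = TH k ?x0} = space (measure_pmf D) - ?A" using x0x1[OF n k] by auto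
    moreover have "measure_pmf.prob D (space (measure_pmf D) - ?A) = 1 - measure_pmf.prob D ?A"
      by (rule measure_pmf.prob_compl) simp
    ultimately show ?thesis unfolding cl_succ_def by simp
  qed
  have s1: "cl_succ D (TH k) ?x1 = measure_pmf.prob D ?A"
  proof -
    have "{T. dt_eval T ?x1 = TH k ?x1} \<inter> set_pmf D = ?A \<inter> set_pmf D" using x0x1[OF n k] leaf by auto
    then have "measure_pmf.prob D ({T. dt_eval T ?x1 = TH k ?x1} \<inter> set_pmf D) = measure_pmf.prob D (?A \<inter> set_pmf D)"
      by simp
    then show ?thesis unfolding cl_succ_def by (simp add: measure_Int_set_pmf)
  qed
  have "cl_succ D (TH k) ?x0 > 1/2" "cl_succ D (TH k) ?x1 > 1/2" using all x0x1[OF n k] by auto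
  then show False using s0 s1 by simp
qed

lemma q_zero:
  assumes n: "0 < n" and k: "k \<le> n - 1" and alg: "q_alg n 0 m Us"
  shows "\<not> (\<forall>x\<in>inputs n. q_succ n m Us S (TH k) x > 1/2)"
proof
  assume all: "\<forall>x\<in>inputs n. q_succ n m Us S (TH k) x > 1/2"
  let ?x0 = "replicate n False" and ?x1 = "replicate n True"
  obtain U where U: "Us = [U]" using alg unfolding q_alg_def by (cases Us) auto
  have p: "q_prob1 n m Us S ?x0 = q_prob1 n m Us S ?x1" unfolding q_prob1_def U by simp
  have "q_succ n m Us S (TH k) ?x0 > 1/2" "q_succ n m Us S (TH k) ?x1 > 1/2" using all x0x1[OF n k] by auto
  then show False using p x0x1[OF n k] unfolding q_succ_def by simp
qed


lemma qdim_eq': "qdim n m = n * (2 * m)" by (simp add: qdim_def)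

definition flip :: "nat \<Rightarrow> bool list \<Rightarrow> bool list" where
  "flip i z = z[i := \<not> z ! i]"

lemma vn_unit: "0 < d \<Longrightarrow> vn d (unit_vec d 0) = 1"
proof -
  assume d: "0 < d"
  have "(vn d (unit_vec d 0))\<^sup>2 = (\<Sum>j<d. (cmod (vec_index (unit_vec d 0) j))\<^sup>2)" by (rule vn_sq)
  also have "\<dots> = (\<Sum>j<d. if j = 0 then 1 else 0)"
    by (rule sum.cong[OF refl]) (auto simp: unit_vec_def)
  also have "\<dots> = 1" using d by simp
  finally show ?thesis using vn_nonneg[of d "unit_vec d 0"]
    by (metis abs_of_nonneg power2_eq_1_iff real_sqrt_abs real_sqrt_one)
qed

lemma q_lower:
  assumes alg: "q_alg n T m Us" and beta: "0 < \<beta>"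
    and succ: "\<forall>x\<in>inputs n. 1/2 + \<beta> \<le> q_succ n m Us S (TH k) x"
    and z: "z \<in> inputs n" and I: "I \<subseteq> {..<n}" and diff: "\<forall>i\<in>I. TH k (flip i z) \<noteq> TH k z"
  shows "\<beta> * real (card I) \<le> sqrt 8 * real T * sqrt (real (card I))"
proof (cases "I = {}")
  case True
  then show ?thesis by simp
next
  case False
  then have n: "0 < n" using I by auto
  let ?d = "n * (2 * m)"
  have m: "0 < m" using alg unfolding q_alg_def by simp
  have d: "0 < ?d" using n m by simp
  obtain U0 tl where Us: "Us = U0 # tl" using alg unfolding q_alg_def by (cases Us) auto
  have U0: "is_unitary ?d U0" and tlu: "\<forall>U\<in>set tl. is_unitary ?d U" and len: "length tl = T"
    using alg unfolding q_alg_def Us qdim_eq' by auto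
  let ?u = "U0 *\<^sub>v unit_vec ?d 0"
  have du: "dim_vec ?u = ?d" using U0 by (auto simp: is_unitary_def)
  have vu: "vn ?d ?u = 1" using unitary_vn[OF U0, of "unit_vec ?d 0"] vn_unit[OF d] by simp
  define Oq where "Oq x = pmat ?d (qop_perm m x)" for x
  have Ou: "is_unitary ?d (Oq x)" for x unfolding Oq_def by (rule pmat_unitary[OF pbij_qop[OF m]])
  define psi where "psi x = qtail (Oq x) tl ?u" for x
  have dpsi: "dim_vec (psi x) = ?d" for x unfolding psi_def by (rule qtail_dim[OF Ou tlu du])
  have vpsi: "vn ?d (psi x) = 1" for x unfolding psi_def using qtail_vn[OF Ou tlu du] vu by simp
  have prob: "q_prob1 n m Us S x = (\<Sum>j\<in>S \<inter> {..<?d}. (cmod (vec_index (psi x) j))\<^sup>2)" for x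
    unfolding q_prob1_def Let_def qdim_eq' qop_pmat Us qrun_qtail psi_def Oq_def by simp
  have each: "\<beta> \<le> hyb ?d (Oq z) (Oq (flip i z)) tl ?u" if i: "i \<in> I" for i
  proof -
    let ?y = "flip i z"
    have y: "?y \<in> inputs n" using z unfolding inputs_def flip_def by simp
    have sz: "1/2 + \<beta> \<le> q_succ n m Us S (TH k) z" and sy: "1/2 + \<beta> \<le> q_succ n m Us S (TH k) ?y"
      using succ z y by auto
    have "2 * \<beta> \<le> \<bar>q_prob1 n m Us S z - q_prob1 n m Us S ?y\<bar>"
      using sz sy diff i unfolding q_succ_def by (cases "TH k z") auto
    also have "\<dots> \<le> vdiff ?d (psi z) (psi ?y) * (vn ?d (psi z) + vn ?d (psi ?y))"
      unfolding prob by (rule prob_diff[OF dpsi dpsi])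
    also have "\<dots> = 2 * vdiff ?d (psi z) (psi ?y)" using vpsi by simp
    also have "vdiff ?d (psi z) (psi ?y) \<le> hyb ?d (Oq z) (Oq ?y) tl ?u"
      unfolding psi_def by (rule hyb_bound[OF Ou Ou tlu du])
    finally show ?thesis by simp
  qed
  have "\<beta> * real (card I) = (\<Sum>i\<in>I. \<beta>)" by simp
  also have "\<dots> \<le> (\<Sum>i\<in>I. hyb ?d (Oq z) (Oq (flip i z)) tl ?u)" by (rule sum_mono) (rule each)
  also have "\<dots> \<le> sqrt 8 * real (length tl) * sqrt (real (card I)) * vn ?d ?u"
    unfolding Oq_def
  proof (rule hyb_sum[OF m I _ tlu du])
    fix i j assume "i \<in> I" "j < n" "j \<noteq> i"
    then show "z ! j = flip i z ! j" unfolding flip_def by simp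
  qed
  also have "\<dots> = sqrt 8 * real T * sqrt (real (card I))" using vu len by simp
  finally show ?thesis .
qed

lemma log2_le_self: "1 \<le> T \<Longrightarrow> log 2 (real T) \<le> real T"
proof -
  assume T: "1 \<le> T"
  have "real T < 2 ^ T" by (rule of_nat_less_two_power)
  then have "log 2 (real T) < log 2 (2 ^ T)" using T by (intro log_less) auto
  also have "log 2 (2 ^ T) = real T" by (simp add: log_pow_cancel)
  finally show ?thesis by simp
qed

lemma cost_lower:
  assumes alg: "q_alg n T m Us" and ms: "q_min_succ n m Us S (TH k) > 1/2"
    and z: "z \<in> inputs n" and I: "I \<subseteq> {..<n}" and diff: "\<forall>i\<in>I. TH k (flip i z) \<noteq> TH k z"
    and cI: "real n \<le> 2 * real (card I)" and n: "0 < n"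
  shows "log 2 (real n) / 2 - 3 \<le> real T + log 2 (1 / (2 * (q_min_succ n m Us S (TH k) - 1/2)))"
proof -
  define \<beta> where "\<beta> = q_min_succ n m Us S (TH k) - 1/2"
  have beta: "0 < \<beta>" using ms unfolding \<beta>_def by simp
  have succ: "\<forall>x\<in>inputs n. 1/2 + \<beta> \<le> q_succ n m Us S (TH k) x"
    unfolding \<beta>_def q_min_succ_def using finite_inputs by auto
  define c where "c = real (card I)"
  have "card I \<noteq> 0"
  proof
    assume "card I = 0"
    then show False using cI n by simp
  qed
  then have c1: "1 \<le> c" unfolding c_def by simp
  have main: "\<beta> * c \<le> sqrt 8 * real T * sqrt c"
    unfolding c_def by (rule q_lower[OF alg beta succ z I diff])
  then have main': "\<beta> * sqrt c \<le> sqrt 8 * real T"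
  proof -
    have sc: "0 < sqrt c" using c1 by simp
    have "\<beta> * sqrt c * sqrt c \<le> sqrt 8 * real T * sqrt c" using main c1 by (simp add: mult.assoc)
    then show ?thesis using sc by (simp add: mult_le_cancel_right)
  qed
  have T1: "1 \<le> T"
  proof (rule ccontr)
    assume "\<not> 1 \<le> T"
    then have "T = 0" by simp
    then have "\<beta> * sqrt c \<le> 0" using main' by simp
    moreover have "0 < \<beta> * sqrt c" using beta c1 by simp
    ultimately show False by simp
  qed
  define X where "X = 1 / (2 * \<beta>)"
  have Xpos: "0 < X" unfolding X_def using beta by simp
  have sq: "(\<beta> * sqrt c)\<^sup>2 \<le> (sqrt 8 * real T)\<^sup>2"
    using main' beta c1 by (intro power_mono) auto
  then have "\<beta>\<^sup>2 * c \<le> 8 * (real T)\<^sup>2" using c1 by (simp add: power_mult_distrib)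
  then have Xsq: "c / (32 * (real T)\<^sup>2) \<le> X\<^sup>2"
    unfolding X_def using beta T1 by (simp add: field_simps power2_eq_square)
  have "log 2 (c / (32 * (real T)\<^sup>2)) \<le> log 2 (X\<^sup>2)"
  proof -
    have pos: "0 < c / (32 * (real T)\<^sup>2)" using c1 T1 by simp
    have "0 < X\<^sup>2" using Xpos by simp
    then show ?thesis using Xsq pos by (subst log_le_cancel_iff) auto
  qed
  also have "log 2 (X\<^sup>2) = 2 * log 2 X" using Xpos by (simp add: log_nat_power)
  finally have L1: "log 2 (c / (32 * (real T)\<^sup>2)) \<le> 2 * log 2 X" .
  have L2: "log 2 (c / (32 * (real T)\<^sup>2)) = log 2 c - 5 - 2 * log 2 (real T)"
  proof -
    have "log 2 (c / (32 * (real T)\<^sup>2)) = log 2 c - log 2 (32 * (real T)\<^sup>2)"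
      using c1 T1 by (subst log_divide) auto
    also have "log 2 (32 * (real T)\<^sup>2) = log 2 32 + log 2 ((real T)\<^sup>2)"
      using T1 by (subst log_mult) auto
    also have "log 2 32 = 5"
      using log_pow_cancel[of 2 5] by simp
    also have "log 2 ((real T)\<^sup>2) = 2 * log 2 (real T)" using T1 by (simp add: log_nat_power)
    finally show ?thesis by simp
  qed
  have L3: "log 2 c \<ge> log 2 (real n) - 1"
  proof -
    have "log 2 (real n) \<le> log 2 (2 * c)" using cI n unfolding c_def by (subst log_le_cancel_iff) auto
    also have "log 2 (2 * c) = 1 + log 2 c" using c1 by (simp add: log_mult)
    finally show ?thesis by simp
  qed
  have L4: "log 2 (real T) \<le> real T" by (rule log2_le_self[OF T1])
  have "log 2 (real n) / 2 - 3 \<le> real T + log 2 X" using L1 L2 L3 L4 by linarith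
  then show ?thesis unfolding X_def \<beta>_def .
qed

definition zs :: "nat \<Rightarrow> nat set \<Rightarrow> bool list" where
  "zs n A = map (\<lambda>j. j \<in> A) [0..<n]"

lemma zs_inputs: "zs n A \<in> inputs n" unfolding zs_def inputs_def by simp

lemma count_zs: "A \<subseteq> {..<n} \<Longrightarrow> count_list (zs n A) True = card A"
proof -
  assume A: "A \<subseteq> {..<n}"
  have e: "{j. j < length (zs n A) \<and> zs n A ! j} = {j. j < n \<and> j \<in> A}" unfolding zs_def by auto
  have "count_list (zs n A) True = card {j. j < n \<and> j \<in> A}" unfolding count_card e ..
  also have "{j. j < n \<and> j \<in> A} = A" using A by auto
  finally show ?thesis .
qed

lemma flip_zs: "i < n \<Longrightarrow> flip i (zs n A) = zs n (if i \<in> A then A - {i} else insert i A)"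
  unfolding flip_def zs_def by (rule nth_equalityI) (auto simp: nth_list_update)

lemma choose_I:
  assumes n: "0 < n" and k: "k \<le> n - 1"
  shows "\<exists>z I. z \<in> inputs n \<and> I \<subseteq> {..<n} \<and> (\<forall>i\<in>I. TH k (flip i z) \<noteq> TH k z) \<and> real n \<le> 2 * real (card I)"
proof (cases "2 * k + 1 \<le> n")
  case True
  let ?A = "{..<k}"
  have A: "?A \<subseteq> {..<n}" using k n by auto
  have "\<forall>i\<in>{k..<n}. TH k (flip i (zs n ?A)) \<noteq> TH k (zs n ?A)"
  proof
    fix i assume i: "i \<in> {k..<n}"
    have fl: "flip i (zs n ?A) = zs n (insert i ?A)" using i by (simp add: flip_zs)
    have "insert i ?A \<subseteq> {..<n}" using A i by auto
    then have "count_list (zs n (insert i ?A)) True = k + 1" using i by (simp add: count_zs)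
    moreover have "count_list (zs n ?A) True = k" using A by (simp add: count_zs)
    ultimately show "TH k (flip i (zs n ?A)) \<noteq> TH k (zs n ?A)" unfolding fl TH_def by simp
  qed
  moreover have "real n \<le> 2 * real (card {k..<n})" using True by simp
  ultimately show ?thesis using zs_inputs by (intro exI[of _ "zs n ?A"] exI[of _ "{k..<n}"]) auto
next
  case False
  let ?A = "{..k}"
  have A: "?A \<subseteq> {..<n}" using k n by auto
  have "\<forall>i\<in>{..k}. TH k (flip i (zs n ?A)) \<noteq> TH k (zs n ?A)"
  proof
    fix i assume i: "i \<in> {..k}"
    have "i < n" using i k n by auto
    then have fl: "flip i (zs n ?A) = zs n (?A - {i})" using i by (simp add: flip_zs)
    have "?A - {i} \<subseteq> {..<n}" using A by auto
    then have "count_list (zs n (?A - {i})) True = k" using i by (simp add: count_zs)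
    moreover have "count_list (zs n ?A) True = k + 1" using A by (simp add: count_zs)
    ultimately show "TH k (flip i (zs n ?A)) \<noteq> TH k (zs n ?A)" unfolding fl TH_def by simp
  qed
  moreover have "real n \<le> 2 * real (card {..k})" using False by simp
  moreover have "{..k} \<subseteq> {..<n}" using A .
  ultimately show ?thesis using zs_inputs by (intro exI[of _ "zs n ?A"] exI[of _ "{..k}"]) auto
qed



lemma Lk_pos: "0 < n \<Longrightarrow> k \<le> n - 1 \<Longrightarrow> 0 < real (Lk n k)"
  using Lk_bounds[of n k] by simp

lemma UC_one:
  assumes n: "0 < n" and k: "k \<le> n - 1"
  shows "UC n (TH k) = 1"
  unfolding UC_def
proof (rule Least_equality)
  show "\<exists>D. cl_alg n 1 D \<and> (\<forall>x\<in>inputs n. cl_succ D (TH k) x > 1/2)"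
  proof (intro exI conjI ballI)
    show "cl_alg n 1 (D1 n k)" by (rule D1_alg[OF n k])
    fix x assume "x \<in> inputs n"
    then have "1/2 + 1 / (2 * real (Lk n k)) \<le> cl_succ (D1 n k) (TH k) x"
      using D1_succ[OF n k] by (simp add: inputs_def)
    moreover have "0 < 1 / (2 * real (Lk n k))" using Lk_pos[OF n k] by simp
    ultimately show "cl_succ (D1 n k) (TH k) x > 1/2" by linarith
  qed
next
  fix y assume "\<exists>D. cl_alg n y D \<and> (\<forall>x\<in>inputs n. cl_succ D (TH k) x > 1/2)"
  then obtain D where D: "cl_alg n y D" "\<forall>x\<in>inputs n. cl_succ D (TH k) x > 1/2" by blast
  show "1 \<le> y"
  proof (rule ccontr)
    assume "\<not> 1 \<le> y"
    then have "y = 0" by simp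
    then have "cl_alg n 0 D" using D by simp
    then show False using cl_zero[OF n k] D(2) by blast
  qed
qed

lemma UQ_one:
  assumes n: "0 < n" and k: "k \<le> n - 1"
  shows "UQ n (TH k) = 1"
  unfolding UQ_def
proof (rule Least_equality)
  obtain m Us S where alg: "q_alg n 1 m Us" and pr: "\<forall>x. q_prob1 n m Us S x = measure_pmf.prob (D1 n k) {T. dt_eval T x}"
    using sim_exists[OF D1_alg[OF n k] n] by blast
  show "\<exists>m Us S. q_alg n 1 m Us \<and> (\<forall>x\<in>inputs n. q_succ n m Us S (TH k) x > 1/2)"
  proof (intro exI conjI ballI)
    show "q_alg n 1 m Us" by (rule alg)
    fix x assume "x \<in> inputs n"
    then have "1/2 + 1 / (2 * real (Lk n k)) \<le> cl_succ (D1 n k) (TH k) x"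
      using D1_succ[OF n k] by (simp add: inputs_def)
    moreover have "0 < 1 / (2 * real (Lk n k))" using Lk_pos[OF n k] by simp
    moreover have "q_succ n m Us S (TH k) x = cl_succ (D1 n k) (TH k) x" by (rule succ_eq) (use pr in simp)
    ultimately show "q_succ n m Us S (TH k) x > 1/2" by linarith
  qed
next
  fix y assume "\<exists>m Us S. q_alg n y m Us \<and> (\<forall>x\<in>inputs n. q_succ n m Us S (TH k) x > 1/2)"
  then obtain m Us S where D: "q_alg n y m Us" "\<forall>x\<in>inputs n. q_succ n m Us S (TH k) x > 1/2" by blast
  show "1 \<le> y"
  proof (rule ccontr)
    assume "\<not> 1 \<le> y"
    then have "y = 0" by simp
    then have "q_alg n 0 m Us" using D by simp
    then show False using q_zero[OF n k] D(2) by blast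
  qed
qed

lemma part2:
  assumes N: "4096 \<le> n" and k: "k \<le> n - 1"
  shows "1/4 * log 2 (real n) \<le> WUQ n (TH k) \<and> WUQ n (TH k) \<le> WUC n (TH k) \<and> WUC n (TH k) \<le> 2 * log 2 (real n)"
proof -
  have n: "0 < n" using N by simp
  define Q where "Q = {real q + log 2 (1 / (2 * (q_min_succ n m Us S (TH k) - 1/2))) | q m Us S.
                   q_alg n q m Us \<and> q_min_succ n m Us S (TH k) > 1/2}"
  define C where "C = {real q + log 2 (1 / (2 * (cl_min_succ n (TH k) D - 1/2))) | q D.
                   cl_alg n q D \<and> cl_min_succ n (TH k) D > 1/2}"
  have WQ: "WUQ n (TH k) = Inf Q" unfolding WUQ_def Q_def ..
  have WC: "WUC n (TH k) = Inf C" unfolding WUC_def C_def ..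
  obtain z I where zI: "z \<in> inputs n" "I \<subseteq> {..<n}" "\<forall>i\<in>I. TH k (flip i z) \<noteq> TH k z" "real n \<le> 2 * real (card I)"
    using choose_I[OF n k] by blast
  have lowQ: "log 2 (real n) / 2 - 3 \<le> v" if "v \<in> Q" for v
  proof -
    from that obtain q m Us S where v: "v = real q + log 2 (1 / (2 * (q_min_succ n m Us S (TH k) - 1/2)))"
      and alg: "q_alg n q m Us" and ms: "q_min_succ n m Us S (TH k) > 1/2" unfolding Q_def by blast
    show ?thesis unfolding v by (rule cost_lower[OF alg ms zI n])
  qed
  have CQ: "C \<subseteq> Q"
  proof
    fix v assume "v \<in> C"
    then obtain q D where v: "v = real q + log 2 (1 / (2 * (cl_min_succ n (TH k) D - 1/2)))"
      and alg: "cl_alg n q D" and ms: "cl_min_succ n (TH k) D > 1/2" unfolding C_def by blast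
    obtain m Us S where qa: "q_alg n q m Us" and pr: "\<forall>x. q_prob1 n m Us S x = measure_pmf.prob D {T. dt_eval T x}"
      using sim_exists[OF alg n] by blast
    have "q_succ n m Us S (TH k) x = cl_succ D (TH k) x" for x by (rule succ_eq) (use pr in simp)
    then have me: "q_min_succ n m Us S (TH k) = cl_min_succ n (TH k) D"
      unfolding q_min_succ_def cl_min_succ_def by simp
    have v': "v = real q + log 2 (1 / (2 * (q_min_succ n m Us S (TH k) - 1/2)))" using v me by simp
    have ms': "q_min_succ n m Us S (TH k) > 1/2" using ms me by simp
    show "v \<in> Q" unfolding Q_def using qa ms' v' by blast
  qed
  define ms1 where "ms1 = cl_min_succ n (TH k) (D1 n k)"
  define L where "L = real (Lk n k)"
  have Lpos: "0 < L" unfolding L_def by (rule Lk_pos[OF n k])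
  have L2n: "L \<le> 2 * real n" unfolding L_def using Lk_bounds[OF n k] by simp
  have ms1: "1/2 + 1 / (2 * L) \<le> ms1" unfolding ms1_def L_def by (rule D1_min[OF n k])
  have ms1g: "ms1 > 1/2" using ms1 Lpos by (smt (verit) divide_pos_pos)
  define v1 where "v1 = real (1::nat) + log 2 (1 / (2 * (ms1 - 1/2)))"
  have v1C: "v1 \<in> C" unfolding C_def v1_def ms1_def using D1_alg[OF n k] ms1g[unfolded ms1_def] by blast
  have logn: "12 \<le> log 2 (real n)"
  proof -
    have "log 2 (4096::real) = 12" using log_pow_cancel[of 2 12] by simp
    moreover have "log 2 (4096::real) \<le> log 2 (real n)" using N by (subst log_le_cancel_iff) auto
    ultimately show ?thesis by simp
  qed
  have v1le: "v1 \<le> 2 * log 2 (real n)"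
  proof -
    have b: "1 / L \<le> 2 * (ms1 - 1/2)" using ms1 by simp
    have bp: "0 < 2 * (ms1 - 1/2)" using ms1g by simp
    have "1 / (2 * (ms1 - 1/2)) \<le> L"
      using b bp Lpos by (simp add: divide_le_eq field_simps)
    then have "log 2 (1 / (2 * (ms1 - 1/2))) \<le> log 2 L" using bp Lpos by (subst log_le_cancel_iff) auto
    also have "\<dots> \<le> log 2 (2 * real n)" using L2n Lpos by (subst log_le_cancel_iff) auto
    also have "\<dots> = 1 + log 2 (real n)" using n by (subst log_mult) auto
    finally show ?thesis unfolding v1_def using logn by simp
  qed
  have Qne: "Q \<noteq> {}" using v1C CQ by blast
  have bddQ: "bdd_below Q" using lowQ by (rule bdd_belowI)
  have bddC: "bdd_below C" using bddQ CQ by (rule bdd_below_mono)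
  have A: "1/4 * log 2 (real n) \<le> Inf Q"
  proof (rule cInf_greatest[OF Qne])
    fix v assume "v \<in> Q"
    then have "log 2 (real n) / 2 - 3 \<le> v" by (rule lowQ)
    then show "1/4 * log 2 (real n) \<le> v" using logn by simp
  qed
  have B: "Inf Q \<le> Inf C" using v1C by (intro cInf_superset_mono[OF _ bddQ CQ]) auto
  have Cc: "Inf C \<le> 2 * log 2 (real n)" by (rule cInf_lower2[OF v1C v1le bddC])
  show ?thesis unfolding WQ WC using A B Cc by simp
qed

theorem theorem6:
  shows "(\<forall>n k. 2 \<le> n \<and> k \<le> n - 1 \<longrightarrow> UC n (TH k) = 1 \<and> UQ n (TH k) = 1)
       \<and> (\<exists>c1 c2 :: real. c1 > 0 \<and> c2 > 0 \<and> (\<exists>N. \<forall>n k. N \<le> n \<and> k \<le> n - 1 \<longrightarrow>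
             c1 * log 2 n \<le> WUQ n (TH k) \<and> WUQ n (TH k) \<le> WUC n (TH k)
             \<and> WUC n (TH k) \<le> c2 * log 2 n))"
proof
  show "\<forall>n k. 2 \<le> n \<and> k \<le> n - 1 \<longrightarrow> UC n (TH k) = 1 \<and> UQ n (TH k) = 1"
  proof (intro allI impI)
    fix n k :: nat assume a: "2 \<le> n \<and> k \<le> n - 1"
    then have n: "0 < n" by simp
    show "UC n (TH k) = 1 \<and> UQ n (TH k) = 1" using UC_one[OF n] UQ_one[OF n] a by simp
  qed
  show "\<exists>c1 c2 :: real. c1 > 0 \<and> c2 > 0 \<and> (\<exists>N. \<forall>n k. N \<le> n \<and> k \<le> n - 1 \<longrightarrow>
             c1 * log 2 n \<le> WUQ n (TH k) \<and> WUQ n (TH k) \<le> WUC n (TH k)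
             \<and> WUC n (TH k) \<le> c2 * log 2 n)"
  proof (rule exI[where x="1/4"], rule exI[where x=2], intro conjI)
    show "(1/4::real) > 0" by simp
    show "(2::real) > 0" by simp
    show "\<exists>N. \<forall>n k. N \<le> n \<and> k \<le> n - 1 \<longrightarrow>
             1/4 * log 2 n \<le> WUQ n (TH k) \<and> WUQ n (TH k) \<le> WUC n (TH k)
             \<and> WUC n (TH k) \<le> 2 * log 2 n"
      by (rule exI[where x=4096]) (use part2 in blast)
  qed
qed


end
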